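(* In the setting described in the context, suppose $p_i,p_j,p_k,p_l,p_u,p_w\in S_1$ satisfy $d(p_i,p_k)\ne d(p_j,p_l)$, $d(p_i,p_u)\ne d(p_j,p_w)$ and $d(p_k,p_u)\ne d(p_l,p_w)$. If $C_2$ is a conic, then $|C_{ij}\cap C_{kl}\cap C_{uw}|\le4$.
   Context: A plane algebraic curve is an infinite set $Z_{\mathbb{R}}(f)=\{(a,b)\in\mathbb{R}^2:f(a,b)=0\}$ for a nonzero $f\in\mathbb{R}[x,y]$; its degree is the minimal degree of such $f$; it is irreducible if $f$ can be chosen irreducible over $\mathbb{R}$. A conic is a curve of degree 2 that is not a union of two lines. Setting: $d\ge1$; $C_1=Z_{\mathbb{R}}(f_1)$ and $C_2=Z_{\mathbb{R}}(f_2)$ are irreducible plane algebraic curves of degree at most $d$ (possibly equal), with $f_1,f_2$ of minimum degree. $S_1=\{p_1,\dots,p_m\}\subset C_1$ and $S_2=\{q_1,\dots,q_n\}\subset C_2$ are sets of distinct points, $p_i=(a_i,b_i)$, satisfying: (1) neither $C_1$ nor $C_2$ is a vertical line; (2) $S_1\cap S_2=\emptyset$; (3) if $C_1$ (resp. $C_2$) is a circle, its center is not in $S_2$ (resp. $S_1$); (4) if $C_1$ (resp. $C_2$) is a circle, every concentric circle contains at most one point of $S_2$ (resp. $S_1$); (5) if $C_1$ (resp. $C_2$) is a line, then for every line $\ell$ parallel to it, the union of $\ell$ and its reflection in $C_1$ (resp. $C_2$) contains at most one point of $S_2$ (resp. $S_1$); (6) if $C_1$ (resp. $C_2$) is a line,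 every orthogonal line contains at most one point of $S_2$ (resp. $S_1$). For $1\le i,j\le m$, $C_{ij}\subset\mathbb{R}^4$ is the set of $(x,y,x',y')$ with $f_2(x,y)=0$, $f_2(x',y')=0$ and $(x-a_i)^2+(y-b_i)^2=(x'-a_j)^2+(y'-b_j)^2$. $d(\cdot,\cdot)$ is Euclidean distance. *)

theory Defs
  imports "HOL-Analysis.Analysis" "HOL-Computational_Algebra.Computational_Algebra"
begin

type_synonym pt = "real \<times> real"

text \<open>Bivariate real polynomials are represented as elements of R[x][y], i.e. the type
  real poly poly: the outer variable is y, the coefficients are polynomials in x.\<close>

definition eval2 :: "real poly poly \<Rightarrow> real \<Rightarrow> real \<Rightarrow> real" where
  "eval2 f a b = poly (map_poly (\<lambda>c. poly c a) f) b"

definition tdeg :: "real poly poly \<Rightarrow> nat" where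
  "tdeg f = Max ({degree (coeff f j) + j | j. coeff f j \<noteq> 0} \<union> {0})"

definition zset :: "real poly poly \<Rightarrow> pt set" where
  "zset f = {(a, b). eval2 f a b = 0}"

definition plane_curve :: "pt set \<Rightarrow> bool" where
  "plane_curve C \<longleftrightarrow> infinite C \<and> (\<exists>f. f \<noteq> 0 \<and> C = zset f)"

definition curve_degree :: "pt set \<Rightarrow> nat" where
  "curve_degree C = (LEAST n. \<exists>f. f \<noteq> 0 \<and> zset f = C \<and> tdeg f = n)"

definition irreducible_curve :: "pt set \<Rightarrow> bool" where
  "irreducible_curve C \<longleftrightarrow> plane_curve C \<and> (\<exists>f. irreducible f \<and> zset f = C)"

definition is_line :: "pt set \<Rightarrow> bool" where
  "is_line C \<longleftrightarrow> plane_curve C \<and> curve_degree C = 1"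

definition is_conic :: "pt set \<Rightarrow> bool" where
  "is_conic C \<longleftrightarrow> plane_curve C \<and> curve_degree C = 2 \<and>
     \<not> (\<exists>L1 L2. is_line L1 \<and> is_line L2 \<and> C = L1 \<union> L2)"

definition lin :: "real \<Rightarrow> real \<Rightarrow> real \<Rightarrow> pt set" where
  "lin a b c = {(x, y). a * x + b * y = c}"

definition vertical_line :: "pt set \<Rightarrow> bool" where
  "vertical_line C \<longleftrightarrow> (\<exists>c. C = {(x, y). x = c})"

definition is_circle :: "pt set \<Rightarrow> pt \<Rightarrow> real \<Rightarrow> bool" where
  "is_circle C c r \<longleftrightarrow> r > 0 \<and> C = {p. dist p c = r}"

definition is_circ :: "pt set \<Rightarrow> bool" where
  "is_circ C \<longleftrightarrow> (\<exists>c r. is_circle C c r)"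

definition reflect :: "real \<Rightarrow> real \<Rightarrow> real \<Rightarrow> pt \<Rightarrow> pt" where
  "reflect a b c p = (let t = 2 * (a * fst p + b * snd p - c) / (a\<^sup>2 + b\<^sup>2)
                      in (fst p - t * a, snd p - t * b))"

text \<open>Conditions (3)-(6) on the pair (curve C, point set S of the other curve).\<close>
definition circle_cond :: "pt set \<Rightarrow> pt set \<Rightarrow> bool" where
  "circle_cond C S \<longleftrightarrow> (\<forall>c r. is_circle C c r \<longrightarrow>
      c \<notin> S \<and>
      (\<forall>r'>0. \<forall>p\<in>S. \<forall>q\<in>S. dist p c = r' \<and> dist q c = r' \<longrightarrow> p = q))"

text \<open>A line parallel to C = lin a b c is lin a b c' with c' different from c.\<close>
definition line_cond :: "pt set \<Rightarrow> pt set \<Rightarrow> bool" where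
  "line_cond C S \<longleftrightarrow> (\<forall>a b c. (a, b) \<noteq> (0, 0) \<and> C = lin a b c \<longrightarrow>
      (\<forall>c'. c' \<noteq> c \<longrightarrow>
         (\<forall>p\<in>S. \<forall>q\<in>S. p \<in> lin a b c' \<union> reflect a b c ` lin a b c' \<and>
                         q \<in> lin a b c' \<union> reflect a b c ` lin a b c' \<longrightarrow> p = q)) \<and>
      (\<forall>c'. \<forall>p\<in>S. \<forall>q\<in>S. p \<in> lin (- b) a c' \<and> q \<in> lin (- b) a c' \<longrightarrow> p = q))"

definition Cset :: "real poly poly \<Rightarrow> (nat \<Rightarrow> pt) \<Rightarrow> nat \<Rightarrow> nat \<Rightarrow> (real \<times> real \<times> real \<times> real) set" where
  "Cset f2 p i j = {(x, y, x', y'). eval2 f2 x y = 0 \<and> eval2 f2 x' y' = 0 \<and>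
      (x - fst (p i))\<^sup>2 + (y - snd (p i))\<^sup>2 = (x' - fst (p j))\<^sup>2 + (y' - snd (p j))\<^sup>2}"

end

theory Submission
  imports Defs
begin


definition qv :: "real \<Rightarrow> real \<Rightarrow> real \<Rightarrow> real \<Rightarrow> real \<Rightarrow> real \<Rightarrow> real \<Rightarrow> real \<Rightarrow> real" where
  "qv a b c d e g x y = a*x^2 + b*x*y + c*y^2 + d*x + e*y + g"

definition isq :: "(real \<Rightarrow> real \<Rightarrow> real) \<Rightarrow> bool" where
  "isq G \<longleftrightarrow> (\<exists>a b c d e g. \<forall>x y. G x y = qv a b c d e g x y)"

lemma coeff_zero:
  assumes "\<forall>x y. qv a b c d e g x y = 0"
  shows "a = 0 \<and> b = 0 \<and> c = 0 \<and> d = 0 \<and> e = 0 \<and> g = 0"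
proof -
  have 1: "g = 0" using assms[rule_format, of 0 0] by (simp add: qv_def)
  have 2: "a + d + g = 0" using assms[rule_format, of 1 0] by (simp add: qv_def)
  have 3: "a - d + g = 0" using assms[rule_format, of "-1" 0] by (simp add: qv_def)
  have 4: "c + e + g = 0" using assms[rule_format, of 0 1] by (simp add: qv_def)
  have 5: "c - e + g = 0" using assms[rule_format, of 0 "-1"] by (simp add: qv_def)
  have 6: "a + b + c + d + e + g = 0" using assms[rule_format, of 1 1] by (simp add: qv_def)
  show ?thesis using 1 2 3 4 5 6 by linarith
qed

lemma coeff_eq:
  assumes "\<forall>x y. qv a b c d e g x y = qv a' b' c' d' e' g' x y"
  shows "a = a' \<and> b = b' \<and> c = c' \<and> d = d' \<and> e = e' \<and> g = g'"
proof -
  have "\<forall>x y. qv (a-a') (b-b') (c-c') (d-d') (e-e') (g-g') x y = 0"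
    using assms by (simp add: qv_def algebra_simps)
  from coeff_zero[OF this] show ?thesis by simp
qed

lemma quad_three_roots:
  fixes al be ga s1 s2 s3 :: real
  assumes "al* s1^2 + be* s1 + ga = 0" "al* s2^2 + be* s2 + ga = 0" "al* s3^2 + be* s3 + ga = 0"
    and "s1 \<noteq> s2" "s1 \<noteq> s3" "s2 \<noteq> s3"
  shows "al = 0 \<and> be = 0 \<and> ga = 0"
proof -
  have e1: "(s1 - s2) * (al*(s1+s2) + be) = 0"
    using assms(1,2) by (simp add: algebra_simps power2_eq_square) 
  have e1': "al*(s1+s2) + be = 0" using e1 assms(4) by simp
  have e2: "(s1 - s3) * (al*(s1+s3) + be) = 0"
    using assms(1,3) by (simp add: algebra_simps power2_eq_square)
  have e2': "al*(s1+s3) + be = 0" using e2 assms(5) by simp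
  have "al * (s2 - s3) = (al*(s1+s2) + be) - (al*(s1+s3) + be)" by (simp add: algebra_simps)
  then have "al * (s2 - s3) = 0" using e1' e2' by simp
  then have a0: "al = 0" using assms(6) by simp
  then have "be = 0" using e1' by simp
  then show ?thesis using a0 assms(1) by simp
qed

definition affine2 :: "(real \<Rightarrow> real \<Rightarrow> real) \<Rightarrow> bool" where
  "affine2 m \<longleftrightarrow> (\<exists>m1 m2 m0. \<forall>x y. m x y = m1*x + m2*y + m0)"

lemma qv_line_expand:
  "qv a b c d e g (u1 + s*w1 - r*w2) (u2 + s*w2 + r*w1) =
     (a*w1^2 + b*w1*w2 + c*w2^2)* s^2 + (2*a*u1*w1 + b*(u1*w2+u2*w1) + 2*c*u2*w2 + d*w1 + e*w2)* s
     + qv a b c d e g u1 u2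
     + s*r*(-2*a*w1*w2 + b*(w1^2 - w2^2) + 2*c*w1*w2) + r^2*(a*w2^2 - b*w1*w2 + c*w1^2)
     + r*(-2*a*u1*w2 + b*(u1*w1 - u2*w2) + 2*c*u2*w1 - d*w2 + e*w1)"
  unfolding qv_def by (simp add: power2_eq_square algebra_simps)

lemma factor_line:
  assumes G: "isq G" and w: "(w1,w2) \<noteq> (0,0)"
    and z: "G (u1 + s1*w1) (u2 + s1*w2) = 0" "G (u1 + s2*w1) (u2 + s2*w2) = 0"
           "G (u1 + s3*w1) (u2 + s3*w2) = 0"
    and d: "s1 \<noteq> s2" "s1 \<noteq> s3" "s2 \<noteq> s3"
  shows "\<exists>m. affine2 m \<and> (\<forall>x y. G x y = (w1*(y-u2) - w2*(x-u1)) * m x y)"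
proof -
  obtain a b c d e g where Gq: "\<And>x y. G x y = qv a b c d e g x y" using G unfolding isq_def by blast
  define al where "al = a*w1^2 + b*w1*w2 + c*w2^2"
  define be where "be = 2*a*u1*w1 + b*(u1*w2+u2*w1) + 2*c*u2*w2 + d*w1 + e*w2"
  define ga where "ga = qv a b c d e g u1 u2"
  define B1 where "B1 = -2*a*w1*w2 + b*(w1^2 - w2^2) + 2*c*w1*w2"
  define C1 where "C1 = a*w2^2 - b*w1*w2 + c*w1^2"
  define E1 where "E1 = -2*a*u1*w2 + b*(u1*w1 - u2*w2) + 2*c*u2*w1 - d*w2 + e*w1"
  have L: "\<And>s r. G (u1 + s*w1 - r*w2) (u2 + s*w2 + r*w1) = al* s^2 + be* s + ga + s*r*B1 + r^2*C1 + r*E1"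
    unfolding Gq al_def be_def ga_def B1_def C1_def E1_def by (rule qv_line_expand)
  have L0: "\<And>s. G (u1 + s*w1) (u2 + s*w2) = al* s^2 + be* s + ga"
    using L[of _ 0] by simp
  have "al = 0 \<and> be = 0 \<and> ga = 0"
    by (rule quad_three_roots[OF _ _ _ d]) (use z L0 in auto)
  then have L1: "\<And>s r. G (u1 + s*w1 - r*w2) (u2 + s*w2 + r*w1) = r * (s*B1 + r*C1 + E1)"
    using L by (simp add: algebra_simps power2_eq_square)
  define N where "N = w1^2 + w2^2"
  have N: "N \<noteq> 0" using w unfolding N_def by (auto simp: sum_power2_eq_zero_iff)
  define m where "m = (\<lambda>x y. (((x-u1)*w1 + (y-u2)*w2)/N*B1 + ((w1*(y-u2) - w2*(x-u1))/N)*C1 + E1)/N)"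
  have "affine2 m"
    unfolding affine2_def m_def
    by (rule exI[of _ "(w1*B1 - w2*C1)/N/N"], rule exI[of _ "(w2*B1 + w1*C1)/N/N"],
        rule exI[of _ "((-u1*w1 - u2*w2)*B1/N + (u1*w2 - u2*w1)*C1/N + E1)/N"])
       (simp add: field_simps N)
  moreover have "G x y = (w1*(y-u2) - w2*(x-u1)) * m x y" for x y
  proof -
    define s where "s = ((x-u1)*w1 + (y-u2)*w2)/N"
    define r where "r = (w1*(y-u2) - w2*(x-u1))/N"
    have "(u1 + s*w1 - r*w2)*N = x*N"
      unfolding s_def r_def using N by (simp add: field_simps) (simp add: N_def algebra_simps power2_eq_square)
    then have x: "u1 + s*w1 - r*w2 = x" using N by simp
    have "(u2 + s*w2 + r*w1)*N = y*N"
      unfolding s_def r_def using N by (simp add: field_simps) (simp add: N_def algebra_simps power2_eq_square)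
    then have y: "u2 + s*w2 + r*w1 = y" using N by simp
    have "G x y = r * (s*B1 + r*C1 + E1)" using L1[of s r] x y by simp
    also have "\<dots> = (w1*(y-u2) - w2*(x-u1)) * m x y"
      unfolding m_def r_def s_def using N by (simp add: field_simps)
    finally show ?thesis .
  qed
  ultimately show ?thesis by blast
qed



definition cc :: "real poly poly \<Rightarrow> nat \<Rightarrow> nat \<Rightarrow> real" where
  "cc f j i = coeff (coeff f j) i"

lemma tdeg_bound:
  assumes "cc f j i \<noteq> 0"
  shows "i + j \<le> tdeg f"
proof -
  have cj: "coeff f j \<noteq> 0" using assms unfolding cc_def by auto
  have i: "i \<le> degree (coeff f j)" using assms unfolding cc_def by (simp add: le_degree)
  let ?S = "{degree (coeff f j) + j | j. coeff f j \<noteq> 0} \<union> {0}"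
  have "{degree (coeff f j) + j | j. coeff f j \<noteq> 0} \<subseteq> (\<lambda>j. degree (coeff f j) + j) ` {..degree f}"
    by (auto intro: le_degree)
  then have fin: "finite ?S" by (meson finite_Un finite_atMost finite_imageI finite_insert finite_subset finite.emptyI)
  have "degree (coeff f j) + j \<in> ?S" using cj by blast
  then have "degree (coeff f j) + j \<le> Max ?S" using fin by (rule Max_ge[rotated])
  then show ?thesis using i unfolding tdeg_def by simp
qed

lemma rep_poly:
  assumes "tdeg f \<le> 2"
  shows "f = [: [:cc f 0 0, cc f 0 1, cc f 0 2:], [:cc f 1 0, cc f 1 1:], [:cc f 2 0:] :]"
proof (rule poly_eqI)
  fix n
  have z: "cc f j i = 0" if "i + j > 2" for i j using tdeg_bound[of f j i] assms that by linarith
  show "coeff f n = coeff [: [:cc f 0 0, cc f 0 1, cc f 0 2:], [:cc f 1 0, cc f 1 1:], [:cc f 2 0:] :] n"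
  proof (rule poly_eqI)
    fix i
    have n: "n = 0 \<or> n = 1 \<or> n = 2 \<or> (\<exists>k. n = Suc (Suc (Suc k)))"
      by presburger
    have i: "i = 0 \<or> i = 1 \<or> i = 2 \<or> (\<exists>k. i = Suc (Suc (Suc k)))"
      by presburger
    show "coeff (coeff f n) i = coeff (coeff [: [:cc f 0 0, cc f 0 1, cc f 0 2:], [:cc f 1 0, cc f 1 1:], [:cc f 2 0:] :] n) i"
      using n i z[of i n] unfolding cc_def
      by (auto simp: coeff_pCons numeral_2_eq_2)
  qed
qed

lemma eval2_rep:
  assumes "tdeg f \<le> 2"
  shows "eval2 f x y = qv (cc f 0 2) (cc f 1 1) (cc f 2 0) (cc f 0 1) (cc f 1 0) (cc f 0 0) x y"
proof -
  have "eval2 f x y = eval2 [: [:cc f 0 0, cc f 0 1, cc f 0 2:], [:cc f 1 0, cc f 1 1:], [:cc f 2 0:] :] x y"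
    using rep_poly[OF assms] by simp
  also have "\<dots> = qv (cc f 0 2) (cc f 1 1) (cc f 2 0) (cc f 0 1) (cc f 1 0) (cc f 0 0) x y"
    unfolding eval2_def qv_def by (simp add: map_poly_pCons algebra_simps power2_eq_square)
  finally show ?thesis .
qed

lemma rep_nonzero:
  assumes "tdeg f \<le> 2" "f \<noteq> 0"
  shows "\<not> (cc f 0 2 = 0 \<and> cc f 1 1 = 0 \<and> cc f 2 0 = 0 \<and> cc f 0 1 = 0 \<and> cc f 1 0 = 0 \<and> cc f 0 0 = 0)"
  using rep_poly[OF assms(1)] assms(2) by auto

definition linp :: "real \<Rightarrow> real \<Rightarrow> real \<Rightarrow> real poly poly" where
  "linp al be ga = [: [:-ga, al:], [:be:] :]"

lemma eval2_linp: "eval2 (linp al be ga) x y = al*x + be*y - ga"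
  unfolding eval2_def linp_def by (simp add: map_poly_pCons algebra_simps)

lemma zset_linp: "zset (linp al be ga) = lin al be ga"
  unfolding zset_def lin_def eval2_linp by auto

lemma tdeg_linp:
  assumes "(al, be) \<noteq> (0, 0)"
  shows "tdeg (linp al be ga) = 1"
proof -
  let ?f = "linp al be ga"
  let ?A = "{degree (coeff ?f j) + j | j. coeff ?f j \<noteq> 0}"
  have sub: "?A \<subseteq> {0, 1}"
  proof
    fix n assume "n \<in> ?A"
    then obtain j where j: "n = degree (coeff ?f j) + j" "coeff ?f j \<noteq> 0" by blast
    show "n \<in> {0,1}"
      using j by (cases j) (auto simp: linp_def coeff_pCons degree_pCons_eq_if split: nat.splits if_splits)
  qed
  have one: "1 \<in> ?A"
  proof (cases "al = 0")
    case True
    then have "be \<noteq> 0" using assms by auto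
    then have "coeff ?f 1 \<noteq> 0" "degree (coeff ?f 1) + 1 = 1" by (auto simp: linp_def)
    then show ?thesis by (metis (mono_tags, lifting) mem_Collect_eq)
  next
    case False
    then have "coeff ?f 0 \<noteq> 0" "degree (coeff ?f 0) + 0 = 1" by (auto simp: linp_def)
    then show ?thesis by (metis (mono_tags, lifting) mem_Collect_eq)
  qed
  have "?A \<union> {0} = {0, 1}" using sub one by auto
  then show ?thesis unfolding tdeg_def by simp
qed

lemma tdeg0_const:
  assumes "tdeg f = 0"
  shows "eval2 f x y = cc f 0 0"
proof -
  have z: "cc f j i = 0" if "i + j > 0" for i j using tdeg_bound[of f j i] assms that by linarith
  show ?thesis using eval2_rep[of f x y] assms z[of 2 0] z[of 1 1] z[of 0 2] z[of 1 0] z[of 0 1]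
    by (simp add: qv_def)
qed

lemma lin_point:
  assumes "(al, be) \<noteq> (0, 0)"
  shows "(ga*al/(al^2+be^2) + s * (-be), ga*be/(al^2+be^2) + s*al) \<in> lin al be ga"
proof -
  define N where "N = al^2 + be^2"
  have N: "N \<noteq> 0" using assms unfolding N_def by (auto simp: sum_power2_eq_zero_iff)
  have "al * (ga*al/N + s * (-be)) + be * (ga*be/N + s*al) = ga * (al^2+be^2) / N"
    by (simp add: algebra_simps power2_eq_square add_divide_distrib)
  also have "\<dots> = ga" using N unfolding N_def by simp
  finally show ?thesis unfolding lin_def N_def by simp
qed

lemma infinite_lin:
  assumes "(al, be) \<noteq> (0, 0)"
  shows "infinite (lin al be ga)"
proof
  assume fin: "finite (lin al be ga)"
  let ?h = "\<lambda>s::real. (ga*al/(al^2+be^2) + s * (-be), ga*be/(al^2+be^2) + s*al)"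
  have "inj ?h"
  proof (rule injI)
    fix s t assume "?h s = ?h t"
    then have "s * be = t * be" "s * al = t * al" by auto
    then show "s = t" using assms by auto
  qed
  moreover have "range ?h \<subseteq> lin al be ga" using lin_point[OF assms] by auto
  ultimately have "finite (UNIV :: real set)"
    using fin by (meson finite_imageD finite_subset inj_on_subset subset_UNIV)
  then show False using infinite_UNIV_char_0 by blast
qed

lemma is_line_lin:
  assumes "(al, be) \<noteq> (0, 0)"
  shows "is_line (lin al be ga)"
proof -
  have nz: "linp al be ga \<noteq> 0" using assms unfolding linp_def by auto
  have pc: "plane_curve (lin al be ga)"
    unfolding plane_curve_def using infinite_lin[OF assms] nz zset_linp by metis
  have "curve_degree (lin al be ga) = 1"
    unfolding curve_degree_def
  proof (rule Least_equality)
    show "\<exists>f. f \<noteq> 0 \<and> zset f = lin al be ga \<and> tdeg f = 1"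
      using nz zset_linp tdeg_linp[OF assms] by blast
  next
    fix n assume "\<exists>f. f \<noteq> 0 \<and> zset f = lin al be ga \<and> tdeg f = n"
    then obtain f where f: "f \<noteq> 0" "zset f = lin al be ga" "tdeg f = n" by blast
    show "1 \<le> n"
    proof (rule ccontr)
      assume "\<not> 1 \<le> n"
      then have t0: "tdeg f = 0" using f by simp
      have "cc f 0 0 \<noteq> 0"
      proof
        assume "cc f 0 0 = 0"
        then have "\<forall>j i. cc f j i = 0"
          using tdeg_bound[of f] t0 by (metis add_is_0 le_zero_eq)
        then have "f = 0" unfolding cc_def by (metis leading_coeff_0_iff)
        then show False using f by simp
      qed
      then have "zset f = {}" unfolding zset_def using tdeg0_const[OF t0] by auto
      then show False using f lin_point[OF assms, of ga 0] assms by auto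
    qed
  qed
  then show ?thesis using pc unfolding is_line_def by simp
qed



definition col :: "pt \<Rightarrow> pt \<Rightarrow> pt \<Rightarrow> bool" where
  "col P Q R \<longleftrightarrow> (fst Q - fst P) * (snd R - snd P) - (snd Q - snd P) * (fst R - fst P) = 0"

locale conicC =
  fixes f :: "real poly poly" and C :: "pt set"
  assumes conic: "is_conic C" and fnz: "f \<noteq> 0" and zs: "zset f = C"
    and td: "tdeg f = curve_degree C"
begin

lemma deg2: "tdeg f = 2" using conic td unfolding is_conic_def by simp

lemma isqF: "isq (eval2 f)"
  unfolding isq_def using eval2_rep[OF eq_refl[OF deg2]] by blast

lemma memC: "(x, y) \<in> C \<longleftrightarrow> eval2 f x y = 0"
  using zs unfolding zset_def by auto

lemma F_not_zero: "\<not> (\<forall>x y. eval2 f x y = 0)"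
proof
  assume "\<forall>x y. eval2 f x y = 0"
  then have "\<forall>x y. qv (cc f 0 2) (cc f 1 1) (cc f 2 0) (cc f 0 1) (cc f 1 0) (cc f 0 0) x y = 0"
    using eval2_rep[OF eq_refl[OF deg2]] by simp
  from coeff_zero[OF this] rep_nonzero[OF eq_refl[OF deg2] fnz] show False by simp
qed

lemma infC: "infinite C" using conic unfolding is_conic_def plane_curve_def by simp

lemma conic_line:
  assumes w: "(w1,w2) \<noteq> (0,0)"
    and z: "(u1 + s1*w1, u2 + s1*w2) \<in> C" "(u1 + s2*w1, u2 + s2*w2) \<in> C"
           "(u1 + s3*w1, u2 + s3*w2) \<in> C"
    and d: "s1 \<noteq> s2" "s1 \<noteq> s3" "s2 \<noteq> s3"
  shows False
proof -
  obtain m where m: "affine2 m" "\<And>x y. eval2 f x y = (w1*(y-u2) - w2*(x-u1)) * m x y"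
    using factor_line[OF isqF w _ _ _ d] z unfolding memC by blast
  obtain m1 m2 m0 where mm: "\<And>x y. m x y = m1*x + m2*y + m0" using m(1) unfolding affine2_def by blast
  have L1: "{p. w1*(snd p-u2) - w2*(fst p-u1) = 0} = lin (-w2) w1 (w1*u2 - w2*u1)"
    unfolding lin_def by (auto simp: algebra_simps)
  have L2: "{p. m (fst p) (snd p) = 0} = lin m1 m2 (-m0)"
    unfolding lin_def by (auto simp: mm algebra_simps)
  have CU: "C = {p. w1*(snd p-u2) - w2*(fst p-u1) = 0} \<union> {p. m (fst p) (snd p) = 0}"
    using memC m(2) by auto
  have lw: "(-w2, w1) \<noteq> (0,0)" using w by auto
  show False
  proof (cases "(m1, m2) = (0,0)")
    case False
    have "is_line (lin (-w2) w1 (w1*u2 - w2*u1))" "is_line (lin m1 m2 (-m0))"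
      using is_line_lin[OF lw] is_line_lin[OF False] by auto
    then show False using conic CU L1 L2 unfolding is_conic_def by metis
  next
    case True
    show False
    proof (cases "m0 = 0")
      case True
      then have "\<forall>x y. eval2 f x y = 0" using m(2) mm \<open>(m1,m2) = (0,0)\<close> by simp
      then show False using F_not_zero by blast
    next
      case False
      then have "{p. m (fst p) (snd p) = 0} = {}" using mm \<open>(m1,m2) = (0,0)\<close> by simp
      then have "C = lin (-w2) w1 (w1*u2 - w2*u1) \<union> lin (-w2) w1 (w1*u2 - w2*u1)"
        using CU L1 by simp
      then show False using conic is_line_lin[OF lw] unfolding is_conic_def by blast
    qed
  qed
qed

lemma col_param:
  assumes "col P Q R" "P \<noteq> Q"
  shows "R = (fst P + ((fst R - fst P)*(fst Q - fst P) + (snd R - snd P)*(snd Q - snd P))/((fst Q - fst P)^2 + (snd Q - snd P)^2) * (fst Q - fst P),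
              snd P + ((fst R - fst P)*(fst Q - fst P) + (snd R - snd P)*(snd Q - snd P))/((fst Q - fst P)^2 + (snd Q - snd P)^2) * (snd Q - snd P))"
proof -
  obtain p1 p2 where P: "P = (p1,p2)" by (cases P)
  obtain q1 q2 where Q: "Q = (q1,q2)" by (cases Q)
  obtain r1 r2 where R: "R = (r1,r2)" by (cases R)
  define N where "N = (q1-p1)^2 + (q2-p2)^2"
  have N: "N \<noteq> 0" using assms(2) unfolding P Q N_def by (auto simp: sum_power2_eq_zero_iff)
  have c: "(q1-p1)*(r2-p2) - (q2-p2)*(r1-p1) = 0" using assms(1) unfolding P Q R col_def by simp
  have e1: "((r1-p1)*(q1-p1) + (r2-p2)*(q2-p2)) * (q1-p1) = (r1 - p1) * N"
  proof -
    have "((r1-p1)*(q1-p1) + (r2-p2)*(q2-p2)) * (q1-p1) = (r1 - p1) * N + (q2-p2)*((q1-p1)*(r2-p2) - (q2-p2)*(r1-p1))"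
      unfolding N_def by (simp add: algebra_simps power2_eq_square)
    then show ?thesis using c by simp
  qed
  have e2: "((r1-p1)*(q1-p1) + (r2-p2)*(q2-p2)) * (q2-p2) = (r2 - p2) * N"
  proof -
    have "((r1-p1)*(q1-p1) + (r2-p2)*(q2-p2)) * (q2-p2) = (r2 - p2) * N - (q1-p1)*((q1-p1)*(r2-p2) - (q2-p2)*(r1-p1))"
      unfolding N_def by (simp add: algebra_simps power2_eq_square)
    then show ?thesis using c by simp
  qed
  have "p1 + ((r1-p1)*(q1-p1) + (r2-p2)*(q2-p2))/N * (q1-p1) = r1"
    using e1 N by (simp add: field_simps)
  moreover have "p2 + ((r1-p1)*(q1-p1) + (r2-p2)*(q2-p2))/N * (q2-p2) = r2"
    using e2 N by (simp add: field_simps)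
  ultimately show ?thesis unfolding P Q R N_def by simp
qed

lemma no_col:
  assumes "P \<in> C" "Q \<in> C" "R \<in> C" "P \<noteq> Q" "P \<noteq> R" "Q \<noteq> R" "col P Q R"
  shows False
proof -
  define s where "s = ((fst R - fst P)*(fst Q - fst P) + (snd R - snd P)*(snd Q - snd P))/((fst Q - fst P)^2 + (snd Q - snd P)^2)"
  have R: "R = (fst P + s * (fst Q - fst P), snd P + s * (snd Q - snd P))"
    using col_param[OF assms(7,4)] unfolding s_def by simp
  have w: "(fst Q - fst P, snd Q - snd P) \<noteq> (0,0)" using assms(4) by (auto simp: prod_eq_iff)
  have s0: "s \<noteq> 0" using R assms(5) by (auto simp: prod_eq_iff)
  have s1: "s \<noteq> 1" using R assms(6) by (auto simp: prod_eq_iff)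
  have z1: "(fst P + 0 * (fst Q - fst P), snd P + 0 * (snd Q - snd P)) \<in> C" using assms by simp
  have z2: "(fst P + 1 * (fst Q - fst P), snd P + 1 * (snd Q - snd P)) \<in> C" using assms by simp
  have z3: "(fst P + s * (fst Q - fst P), snd P + s * (snd Q - snd P)) \<in> C" using assms R by simp
  show False using conic_line[OF w z1 z2 z3] s0 s1 by simp
qed

lemma col_sym: "col P Q R \<Longrightarrow> col P R Q" "col P Q R \<Longrightarrow> col Q P R"
  unfolding col_def by (simp_all add: algebra_simps)

end



lemma isq_lin:
  assumes "isq G" "isq H"
  shows "isq (\<lambda>x y. al * G x y + be * H x y)"
proof -
  obtain a b c d e g where G: "\<And>x y. G x y = qv a b c d e g x y" using assms(1) unfolding isq_def by blast
  obtain a' b' c' d' e' g' where H: "\<And>x y. H x y = qv a' b' c' d' e' g' x y" using assms(2) unfolding isq_def by blast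
  show ?thesis unfolding isq_def
    by (rule exI[of _ "al*a + be*a'"], rule exI[of _ "al*b + be*b'"], rule exI[of _ "al*c + be*c'"],
        rule exI[of _ "al*d + be*d'"], rule exI[of _ "al*e + be*e'"], rule exI[of _ "al*g + be*g'"])
      (simp add: G H qv_def algebra_simps)
qed

lemma affine_three:
  assumes "\<And>x y. m x y = m1*x + m2*y + m0"
    and "m (fst A) (snd A) = 0" "m (fst B) (snd B) = 0" "m (fst E) (snd E) = 0"
    and "\<not> col A B E"
  shows "m1 = 0 \<and> m2 = 0 \<and> m0 = 0"
proof -
  define c where "c = (fst B - fst A) * (snd E - snd A) - (snd B - snd A) * (fst E - fst A)"
  have c: "c \<noteq> 0" using assms(5) unfolding col_def c_def by simp
  have e1: "m1 * (fst B - fst A) + m2 * (snd B - snd A) = 0" using assms(1-3) by (simp add: algebra_simps)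
  have e2: "m1 * (fst E - fst A) + m2 * (snd E - snd A) = 0" using assms(1,2,4) by (simp add: algebra_simps)
  have "m1 * c = (m1 * (fst B - fst A) + m2 * (snd B - snd A)) * (snd E - snd A) - (m1 * (fst E - fst A) + m2 * (snd E - snd A)) * (snd B - snd A)"
    unfolding c_def by (simp add: algebra_simps)
  then have "m1 * c = 0" using e1 e2 by simp
  then have m1: "m1 = 0" using c by simp
  have "m2 * c = (m1 * (fst E - fst A) + m2 * (snd E - snd A)) * (fst B - fst A) - (m1 * (fst B - fst A) + m2 * (snd B - snd A)) * (fst E - fst A)"
    unfolding c_def by (simp add: algebra_simps)
  then have "m2 * c = 0" using e1 e2 by simp
  then have m2: "m2 = 0" using c by simp
  have "m0 = 0" using assms(1,2) m1 m2 by simp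
  then show ?thesis using m1 m2 by simp
qed

context conicC
begin

lemma five:
  assumes G: "isq G"
    and P: "P1 \<in> C" "P2 \<in> C" "P3 \<in> C" "P4 \<in> C" "P5 \<in> C"
    and d: "P1 \<noteq> P2" "P1 \<noteq> P3" "P1 \<noteq> P4" "P1 \<noteq> P5" "P2 \<noteq> P3" "P2 \<noteq> P4" "P2 \<noteq> P5"
           "P3 \<noteq> P4" "P3 \<noteq> P5" "P4 \<noteq> P5"
    and z: "G (fst P1) (snd P1) = 0" "G (fst P2) (snd P2) = 0" "G (fst P3) (snd P3) = 0"
           "G (fst P4) (snd P4) = 0" "G (fst P5) (snd P5) = 0"
  shows "\<exists>k. \<forall>x y. G x y = k * eval2 f x y"
proof -
  define w1 where "w1 = fst P2 - fst P1"
  define w2 where "w2 = snd P2 - snd P1"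
  define R where "R = (fst P1 + 2 * w1, snd P1 + 2 * w2)"
  have w: "(w1, w2) \<noteq> (0,0)" using d(1) unfolding w1_def w2_def by (auto simp: prod_eq_iff)
  have RC: "R \<notin> C"
  proof
    assume "R \<in> C"
    moreover have "col P1 P2 R" unfolding col_def R_def w1_def w2_def by (simp add: algebra_simps)
    moreover have "R \<noteq> P1" "R \<noteq> P2" using w unfolding R_def w1_def w2_def by (auto simp: prod_eq_iff)
    ultimately show False using no_col[OF P(1,2) _ d(1)] by metis
  qed
  define Fr where "Fr = eval2 f (fst R) (snd R)"
  define Gr where "Gr = G (fst R) (snd R)"
  have Fr: "Fr \<noteq> 0" using RC memC[of "fst R" "snd R"] unfolding Fr_def by simp
  define H where "H = (\<lambda>x y. Gr * eval2 f x y + (- Fr) * G x y)"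
  have Hq: "isq H" unfolding H_def by (rule isq_lin[OF isqF G])
  have FP: "eval2 f (fst Pk) (snd Pk) = 0" if "Pk \<in> C" for Pk using that memC[of "fst Pk" "snd Pk"] by simp
  have HP: "H (fst Pk) (snd Pk) = 0" if "Pk \<in> C" "G (fst Pk) (snd Pk) = 0" for Pk
    unfolding H_def using FP[OF that(1)] that(2) by simp
  have h1: "H (fst P1 + 0 * w1) (snd P1 + 0 * w2) = 0" using HP[OF P(1) z(1)] by simp
  have h2: "H (fst P1 + 1 * w1) (snd P1 + 1 * w2) = 0" using HP[OF P(2) z(2)] unfolding w1_def w2_def by simp
  have h3: "H (fst P1 + 2 * w1) (snd P1 + 2 * w2) = 0" unfolding H_def Gr_def Fr_def R_def by simp
  obtain m where m: "affine2 m" "\<And>x y. H x y = (w1*(y - snd P1) - w2*(x - fst P1)) * m x y"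
    using factor_line[OF Hq w h1 h2 h3] by auto
  obtain m1 m2 m0 where mm: "\<And>x y. m x y = m1*x + m2*y + m0" using m(1) unfolding affine2_def by blast
  have mP: "m (fst Pk) (snd Pk) = 0" if "Pk \<in> C" "G (fst Pk) (snd Pk) = 0" "Pk \<noteq> P1" "Pk \<noteq> P2" for Pk
  proof -
    have "\<not> col P1 P2 Pk" using no_col[OF P(1,2) that(1) d(1)] that(3,4) by metis
    then have "w1*(snd Pk - snd P1) - w2*(fst Pk - fst P1) \<noteq> 0"
      unfolding col_def w1_def w2_def by simp
    then show ?thesis using HP[OF that(1,2)] m(2) by simp
  qed
  have nc: "\<not> col P3 P4 P5" using no_col[OF P(3,4,5) d(8,9,10)] by metis
  have "m1 = 0 \<and> m2 = 0 \<and> m0 = 0"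
    by (rule affine_three[OF mm mP mP mP nc]) (use P z d in auto)
  then have H0: "\<And>x y. H x y = 0" using m(2) mm by simp
  show ?thesis
  proof (rule exI[of _ "Gr / Fr"], intro allI)
    fix x y
    have "Gr * eval2 f x y - Fr * G x y = 0" using H0[of x y] unfolding H_def by simp
    then show "G x y = Gr / Fr * eval2 f x y" using Fr by (simp add: field_simps)
  qed
qed

end



definition D3 :: "real \<Rightarrow> real \<Rightarrow> real \<Rightarrow> real \<Rightarrow> real \<Rightarrow> real \<Rightarrow> real" where
  "D3 a b c d e g = 4*a*c*g + b*e*d - a*e^2 - c*d^2 - g*b^2"

definition cA where "cA (a::real) b c m1 m2 m3 m4 = a*m1^2 + b*m1*m3 + c*m3^2"
definition cB where "cB (a::real) b c m1 m2 m3 m4 = 2*a*m1*m2 + b*(m1*m4+m2*m3) + 2*c*m3*m4"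
definition cC where "cC (a::real) b c m1 m2 m3 m4 = a*m2^2 + b*m2*m4 + c*m4^2"
definition cD where "cD (a::real) b c d e m1 m2 m3 m4 t1 t2 = 2*a*m1*t1 + b*(m1*t2+m3*t1) + 2*c*m3*t2 + d*m1 + e*m3"
definition cE where "cE (a::real) b c d e m1 m2 m3 m4 t1 t2 = 2*a*m2*t1 + b*(m2*t2+m4*t1) + 2*c*m4*t2 + d*m2 + e*m4"
definition cG where "cG (a::real) b c d e g t1 t2 = a*t1^2 + b*t1*t2 + c*t2^2 + d*t1 + e*t2 + g"

lemma qv_comp:
  "qv a b c d e g (m1*x + m2*y + t1) (m3*x + m4*y + t2) =
   qv (cA a b c m1 m2 m3 m4) (cB a b c m1 m2 m3 m4) (cC a b c m1 m2 m3 m4)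
      (cD a b c d e m1 m2 m3 m4 t1 t2) (cE a b c d e m1 m2 m3 m4 t1 t2) (cG a b c d e g t1 t2) x y"
  unfolding qv_def cA_def cB_def cC_def cD_def cE_def cG_def
  by (simp add: power2_eq_square algebra_simps)

lemma D3_comp:
  "D3 (cA a b c m1 m2 m3 m4) (cB a b c m1 m2 m3 m4) (cC a b c m1 m2 m3 m4)
      (cD a b c d e m1 m2 m3 m4 t1 t2) (cE a b c d e m1 m2 m3 m4 t1 t2) (cG a b c d e g t1 t2)
   = (m1*m4 - m2*m3)^2 * D3 a b c d e g"
  unfolding D3_def cA_def cB_def cC_def cD_def cE_def cG_def
  by (simp add: power2_eq_square algebra_simps)

lemma Adet_comp:
  "4 * cA a b c m1 m2 m3 m4 * cC a b c m1 m2 m3 m4 - (cB a b c m1 m2 m3 m4)^2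
   = (m1*m4 - m2*m3)^2 * (4*a*c - b^2)"
  unfolding cA_def cB_def cC_def
  by (simp add: power2_eq_square algebra_simps)



lemma kernel3:
  fixes a b c d e g :: real
  assumes "D3 a b c d e g = 0"
  shows "\<exists>z1 z2 z3. \<not> (z1 = 0 \<and> z2 = 0 \<and> z3 = 0) \<and> 2 * a * z1 + b * z2 + d * z3 = 0 \<and>
           b * z1 + 2 * c * z2 + e * z3 = 0 \<and> d * z1 + e * z2 + 2 * g * z3 = 0"
proof -
  define H :: "real^3^3" where "H = vector [vector [2 * a, b, d], vector [b, 2 * c, e], vector [d, e, 2 * g]]"
  have "det H = 2 * D3 a b c d e g"
    unfolding H_def det_3 D3_def by (simp add: power2_eq_square algebra_simps)
  then have "det H = 0" using assms by simp
  then have "\<not> invertible H" using invertible_det_nz by blast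
  then have "\<not> (\<exists>B::real^3^3. B ** H = mat 1)" using invertible_left_inverse by blast
  then obtain x where x: "H *v x = 0" "x \<noteq> 0" using matrix_left_invertible_ker by blast
  have x0: "\<not> (x$1 = 0 \<and> x$2 = 0 \<and> x$3 = 0)"
  proof
    assume "x$1 = 0 \<and> x$2 = 0 \<and> x$3 = 0"
    then have "x = 0" by (simp add: vec_eq_iff forall_3)
    then show False using x(2) by simp
  qed
  have "(H *v x)$1 = 0" "(H *v x)$2 = 0" "(H *v x)$3 = 0" using x(1) by simp_all
  then have "2 * a * x$1 + b * x$2 + d * x$3 = 0" "b * x$1 + 2 * c * x$2 + e * x$3 = 0" "d * x$1 + e * x$2 + 2 * g * x$3 = 0"
    unfolding H_def matrix_vector_mult_def by (simp_all add: sum_3)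
  then show ?thesis using x0 by blast
qed

context conicC
begin

lemma degen_line:
  assumes Cq: "\<And>x y. (x,y) \<in> C \<longleftrightarrow> qv a b c d e g x y = 0" and D: "D3 a b c d e g = 0"
  shows False
proof -
  obtain z1 z2 z3 where z: "\<not> (z1 = 0 \<and> z2 = 0 \<and> z3 = 0)" "2 * a * z1 + b * z2 + d * z3 = 0"
     "b * z1 + 2 * c * z2 + e * z3 = 0" "d * z1 + e * z2 + 2 * g * z3 = 0"
    using kernel3[OF D] by blast
  show False
  proof (cases "z3 = 0")
    case False
    define ka1 where "ka1 = z1/z3"
    define ka2 where "ka2 = z2/z3"
    have k1: "2 * a * ka1 + b * ka2 + d = 0" using z(2) False unfolding ka1_def ka2_def by (simp add: field_simps)
    have k2: "b * ka1 + 2 * c * ka2 + e = 0" using z(3) False unfolding ka1_def ka2_def by (simp add: field_simps)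
    have k3: "d * ka1 + e * ka2 + 2 * g = 0" using z(4) False unfolding ka1_def ka2_def by (simp add: field_simps)
    have q0: "qv a b c d e g ka1 ka2 = 0"
    proof -
      have "2 * qv a b c d e g ka1 ka2 = ka1 * (2 * a * ka1 + b * ka2 + d) + ka2 * (b * ka1 + 2 * c * ka2 + e) + (d * ka1 + e * ka2 + 2 * g)"
        unfolding qv_def by (simp add: algebra_simps power2_eq_square)
      then show ?thesis using k1 k2 k3 by simp
    qed
    have sc: "qv a b c d e g (ka1 + s * v1) (ka2 + s * v2) = s^2 * qv a b c d e g (ka1 + v1) (ka2 + v2)" for s v1 v2
    proof -
      have "qv a b c d e g (ka1 + s * v1) (ka2 + s * v2) = s^2 * (a * v1^2 + b * v1 * v2 + c * v2^2) + s * (v1 * (2 * a * ka1 + b * ka2 + d) + v2 * (b * ka1 + 2 * c * ka2 + e)) + qv a b c d e g ka1 ka2"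
        unfolding qv_def by (simp add: algebra_simps power2_eq_square)
      moreover have "qv a b c d e g (ka1 + v1) (ka2 + v2) = (a * v1^2 + b * v1 * v2 + c * v2^2) + (v1 * (2 * a * ka1 + b * ka2 + d) + v2 * (b * ka1 + 2 * c * ka2 + e)) + qv a b c d e g ka1 ka2"
        unfolding qv_def by (simp add: algebra_simps power2_eq_square)
      ultimately show ?thesis using k1 k2 q0 by simp
    qed
    have "infinite (C - {(ka1,ka2)})" using infC by simp
    then obtain v where v: "v \<in> C" "v \<noteq> (ka1, ka2)" by (metis Diff_iff finite.emptyI insertI1 infinite_imp_nonempty ex_in_conv)
    define w1 where "w1 = fst v - ka1"
    define w2 where "w2 = snd v - ka2"
    have w: "(w1,w2) \<noteq> (0,0)" using v(2) unfolding w1_def w2_def by (auto simp: prod_eq_iff)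
    have v0: "qv a b c d e g (ka1 + w1) (ka2 + w2) = 0" using v(1) Cq[of "fst v" "snd v"] unfolding w1_def w2_def by simp
    have inC: "(ka1 + s * w1, ka2 + s * w2) \<in> C" for s using Cq sc[of s w1 w2] v0 by simp
    show False using conic_line[OF w inC inC inC, of 1 2 3] by simp
  next
    case True
    then have zz: "(z1,z2) \<noteq> (0,0)" "2 * a * z1 + b * z2 = 0" "b * z1 + 2 * c * z2 = 0" "d * z1 + e * z2 = 0"
      using z by auto
    have sc: "qv a b c d e g (v1 + s * z1) (v2 + s * z2) = qv a b c d e g v1 v2" for s v1 v2
    proof -
      have "qv a b c d e g (v1 + s * z1) (v2 + s * z2) = qv a b c d e g v1 v2 + s * (v1 * (2 * a * z1 + b * z2) + v2 * (b * z1 + 2 * c * z2) + (d * z1 + e * z2)) + s^2 * (z1 * (2 * a * z1 + b * z2) + z2 * (b * z1 + 2 * c * z2))/2"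
        unfolding qv_def by (simp add: algebra_simps power2_eq_square)
      then show ?thesis using zz by simp
    qed
    obtain v where v: "v \<in> C" using infC by (metis finite.emptyI ex_in_conv)
    have inC: "(fst v + s * z1, snd v + s * z2) \<in> C" for s using Cq sc v Cq[of "fst v" "snd v"] by simp
    show False using conic_line[OF zz(1) inC inC inC, of 1 2 3] by simp
  qed
qed

end



lemma lagrange: "(a1^2 + a3^2) * (a2^2 + a4^2) - (a1 * a2 + a3 * a4)^2 = (a1 * a4 - a2 * a3)^2" for a1 a2 a3 a4 :: real
  by (simp add: power2_eq_square algebra_simps)

lemma trace_det_I:
  fixes x y z :: real
  assumes "x + y = 2" "x * y - z^2 = 1"
  shows "x = 1 \<and> y = 1 \<and> z = 0"
proof -
  have "(x - y)^2 + (2 * z)^2 = (x+y)^2 - 4 * (x * y - z^2)" by (simp add: power2_eq_square algebra_simps)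
  then have "(x - y)^2 + (2 * z)^2 = 0" using assms by simp
  then have "x - y = 0 \<and> 2 * z = 0" by (metis sum_power2_eq_zero_iff)
  then show ?thesis using assms(1) by simp
qed

context conicC
begin

lemma deg_case:
  fixes m1 m2 m3 m4 t1 t2 p1 p2 q1 q2 lam c :: real
  assumes hc: "\<forall>x y. (x-p1)^2 + (y-p2)^2 - (m1 * x + m2 * y + t1 - q1)^2 - (m3 * x + m4 * y + t2 - q2)^2 = c * eval2 f x y"
    and c: "c \<noteq> 0"
    and fT: "\<forall>x y. eval2 f (m1 * x + m2 * y + t1) (m3 * x + m4 * y + t2) = lam * eval2 f x y"
    and circ: "\<not> (\<exists>r. is_circle C (p1,p2) r)"
  shows False
proof -
  define h where "h = (\<lambda>x y. (x-p1)^2 + (y-p2)^2 - (m1 * x + m2 * y + t1 - q1)^2 - (m3 * x + m4 * y + t2 - q2)^2)"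
  define ah where "ah = 1 - m1^2 - m3^2"
  define bh where "bh = -2 * (m1 * m2 + m3 * m4)"
  define ch where "ch = 1 - m2^2 - m4^2"
  define dh where "dh = -2 * p1 - 2 * m1 * (t1-q1) - 2 * m3 * (t2-q2)"
  define eh where "eh = -2 * p2 - 2 * m2 * (t1-q1) - 2 * m4 * (t2-q2)"
  define gh where "gh = p1^2 + p2^2 - (t1-q1)^2 - (t2-q2)^2"
  have hq: "h x y = qv ah bh ch dh eh gh x y" for x y
    unfolding h_def qv_def ah_def bh_def ch_def dh_def eh_def gh_def
    by (simp add: power2_eq_square algebra_simps)
  have hcf: "h x y = c * eval2 f x y" for x y using hc unfolding h_def by simp
  have Cq: "(x,y) \<in> C \<longleftrightarrow> qv ah bh ch dh eh gh x y = 0" for x y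
    using memC[of x y] hcf[of x y] hq[of x y] c by auto
  have hT: "h (m1 * x + m2 * y + t1) (m3 * x + m4 * y + t2) = lam * h x y" for x y
    using hcf fT by simp
  have "\<forall>x y. qv (cA ah bh ch m1 m2 m3 m4) (cB ah bh ch m1 m2 m3 m4) (cC ah bh ch m1 m2 m3 m4)
      (cD ah bh ch dh eh m1 m2 m3 m4 t1 t2) (cE ah bh ch dh eh m1 m2 m3 m4 t1 t2) (cG ah bh ch dh eh gh t1 t2) x y
     = qv (lam * ah) (lam * bh) (lam * ch) (lam * dh) (lam * eh) (lam * gh) x y"
  proof (intro allI)
    fix x y
    have "qv (lam * ah) (lam * bh) (lam * ch) (lam * dh) (lam * eh) (lam * gh) x y = lam * h x y"
      unfolding hq qv_def by (simp add: algebra_simps)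
    then show "qv (cA ah bh ch m1 m2 m3 m4) (cB ah bh ch m1 m2 m3 m4) (cC ah bh ch m1 m2 m3 m4)
      (cD ah bh ch dh eh m1 m2 m3 m4 t1 t2) (cE ah bh ch dh eh m1 m2 m3 m4 t1 t2) (cG ah bh ch dh eh gh t1 t2) x y
     = qv (lam * ah) (lam * bh) (lam * ch) (lam * dh) (lam * eh) (lam * gh) x y"
      using hT[of x y] qv_comp[symmetric] hq by metis
  qed
  from coeff_eq[OF this] have
    eA: "cA ah bh ch m1 m2 m3 m4 = lam * ah" and eB: "cB ah bh ch m1 m2 m3 m4 = lam * bh"
    and eC: "cC ah bh ch m1 m2 m3 m4 = lam * ch" and eD: "cD ah bh ch dh eh m1 m2 m3 m4 t1 t2 = lam * dh"
    and eE: "cE ah bh ch dh eh m1 m2 m3 m4 t1 t2 = lam * eh" and eG: "cG ah bh ch dh eh gh t1 t2 = lam * gh"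
    by auto
  define x where "x = m1^2 + m3^2"
  define y where "y = m2^2 + m4^2"
  define z where "z = m1 * m2 + m3 * m4"
  define dl where "dl = m1 * m4 - m2 * m3"
  have lag: "x * y - z^2 = dl^2" unfolding x_def y_def z_def dl_def using lagrange by simp
  have Ah: "ah = 1 - x" "bh = -2 * z" "ch = 1 - y" unfolding ah_def bh_def ch_def x_def y_def z_def by simp_all
  show False
  proof (cases "lam = 0")
    case True
    then have TC: "(m1 * x + m2 * y + t1, m3 * x + m4 * y + t2) \<in> C" for x y
      using hT[of x y] hq Cq by simp
    show False
    proof (cases "(m1,m3) = (0,0)")
      case False
      have inC: "(t1 + s * m1, t2 + s * m3) \<in> C" for s using TC[of s 0] by (simp add: algebra_simps)
      show False using conic_line[OF False inC inC inC, of 1 2 3] by simp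
    next
      case m13: True
      show False
      proof (cases "(m2,m4) = (0,0)")
        case False
        have inC: "(t1 + s * m2, t2 + s * m4) \<in> C" for s using TC[of 0 s] by (simp add: algebra_simps)
        show False using conic_line[OF False inC inC inC, of 1 2 3] by simp
      next
        case True
        define rho where "rho = (t1-q1)^2 + (t2-q2)^2"
        have hh: "h x y = (x-p1)^2 + (y-p2)^2 - rho" for x y
          unfolding h_def rho_def using m13 True by simp
        have CC: "(x,y) \<in> C \<longleftrightarrow> (x-p1)^2 + (y-p2)^2 = rho" for x y
          using Cq[of x y] hq[of x y] hh[of x y] by (metis eq_iff_diff_eq_0)
        show False
        proof (cases "rho > 0")
          case True
          have "is_circle C (p1,p2) (sqrt rho)"
            unfolding is_circle_def
          proof
            show "sqrt rho > 0" using True by simp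
            show "C = {p. dist p (p1, p2) = sqrt rho}"
            proof (rule set_eqI)
              fix p :: pt
              obtain u v where p: "p = (u,v)" by (cases p)
              have "dist p (p1,p2) = sqrt ((u-p1)^2 + (v-p2)^2)"
                unfolding p by (simp add: dist_Pair_Pair dist_real_def)
              then show "p \<in> C \<longleftrightarrow> p \<in> {p. dist p (p1, p2) = sqrt rho}"
                using CC[of u v] True unfolding p
                by (auto simp: real_sqrt_eq_iff)
            qed
          qed
          then show False using circ by blast
        next
          case False
          have "C \<subseteq> {(p1,p2)}"
          proof
            fix p assume "p \<in> C"
            then obtain u v where p: "p = (u,v)" "(u-p1)^2 + (v-p2)^2 = rho" using CC by (cases p) auto
            have "rho \<ge> 0" unfolding rho_def by simp
            then have "rho = 0" using False by simp
            then have "u - p1 = 0 \<and> v - p2 = 0" using p(2) by (simp add: sum_power2_eq_zero_iff)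
            then show "p \<in> {(p1,p2)}" using p by simp
          qed
          then show False using infC finite_subset by auto
        qed
      qed
    qed
  next
    case lam0: False
    show False
    proof (cases "D3 ah bh ch dh eh gh = 0")
      case True
      then show False using degen_line[OF Cq] by blast
    next
      case D0: False
      have "D3 (lam * ah) (lam * bh) (lam * ch) (lam * dh) (lam * eh) (lam * gh) = dl^2 * D3 ah bh ch dh eh gh"
        using D3_comp[of ah bh ch m1 m2 m3 m4 dh eh t1 t2 gh] eA eB eC eD eE eG unfolding dl_def by simp
      moreover have "D3 (lam * ah) (lam * bh) (lam * ch) (lam * dh) (lam * eh) (lam * gh) = lam^3 * D3 ah bh ch dh eh gh"
        unfolding D3_def by (simp add: power3_eq_cube power2_eq_square algebra_simps)
      ultimately have d3: "dl^2 = lam^3" using D0 by simp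
      have fin: "x + y = 2" if "dl^2 = 1" "4 * ah * ch - bh^2 = 0"
      proof -
        have "4 * ah * ch - bh^2 = 4 * (1 - (x + y) + (x * y - z^2))" unfolding Ah by (simp add: power2_eq_square algebra_simps)
        then show ?thesis using that lag by simp
      qed
      show False
      proof (cases "4 * ah * ch - bh^2 = 0")
        case False
        have "4 * cA ah bh ch m1 m2 m3 m4 * cC ah bh ch m1 m2 m3 m4 - (cB ah bh ch m1 m2 m3 m4)^2 = dl^2 * (4 * ah * ch - bh^2)"
          using Adet_comp unfolding dl_def by simp
        then have "lam^2 * (4 * ah * ch - bh^2) = dl^2 * (4 * ah * ch - bh^2)"
          unfolding eA eB eC by (simp add: power2_eq_square algebra_simps)
        then have "lam^2 = dl^2" using False by simp
        then have "lam^2 * (lam - 1) = 0" using d3 by (simp add: power2_eq_square power3_eq_cube algebra_simps)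
        then have l1: "lam = 1" using lam0 by simp
        then have dl1: "dl^2 = 1" using d3 by simp
        define n1 where "n1 = m1 * m1 + m2 * m3"
        define n2 where "n2 = m1 * m2 + m2 * m4"
        define n3 where "n3 = m3 * m1 + m4 * m3"
        define n4 where "n4 = m3 * m2 + m4 * m4"
        have iA: "cA ah bh ch m1 m2 m3 m4 = x - (n1^2 + n3^2)"
          unfolding cA_def Ah x_def n1_def n3_def z_def y_def by (simp add: power2_eq_square algebra_simps)
        have iB: "cB ah bh ch m1 m2 m3 m4 = 2 * (z - (n1 * n2 + n3 * n4))"
          unfolding cB_def Ah x_def n1_def n2_def n3_def n4_def z_def y_def by (simp add: power2_eq_square algebra_simps)
        have iC: "cC ah bh ch m1 m2 m3 m4 = y - (n2^2 + n4^2)"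
          unfolding cC_def Ah x_def n2_def n4_def z_def y_def by (simp add: power2_eq_square algebra_simps)
        have nd: "n1 * n4 - n2 * n3 = dl^2" unfolding n1_def n2_def n3_def n4_def dl_def by (simp add: power2_eq_square algebra_simps)
        have N1: "n1^2 + n3^2 = 2 * x - 1" using eA iA l1 Ah by simp
        have N2: "n1 * n2 + n3 * n4 = 2 * z" using eB iB l1 Ah by simp
        have N3: "n2^2 + n4^2 = 2 * y - 1" using eC iC l1 Ah by simp
        have "(2 * x - 1) * (2 * y - 1) - (2 * z)^2 = (dl^2)^2"
          using lagrange[of n1 n3 n2 n4] N1 N2 N3 nd by (simp add: algebra_simps)
        then have "4 * (x * y - z^2) - 2 * (x+y) + 1 = 1" using dl1 by (simp add: power2_eq_square algebra_simps)
        then have "x + y = 2" using lag dl1 by simp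
        then have "x = 1 \<and> y = 1 \<and> z = 0" using trace_det_I lag dl1 by simp
        then have "4 * ah * ch - bh^2 = 0" using Ah by simp
        then show False using False by simp
      next
        case Adet0: True
        have nz: "\<not> (ah = 0 \<and> bh = 0 \<and> ch = 0)"
        proof
          assume "ah = 0 \<and> bh = 0 \<and> ch = 0"
          then have "D3 ah bh ch dh eh gh = 0" unfolding D3_def by simp
          then show False using D0 by simp
        qed
        obtain al1 al2 k where al: "(al1,al2) \<noteq> (0,0)" "k \<noteq> 0"
          "\<And>v1 v2. ah * v1^2 + bh * v1 * v2 + ch * v2^2 = k * (al1 * v1 + al2 * v2)^2"
        proof (cases "ah = 0")
          case False
          have "ch = bh^2/(4 * ah)" using Adet0 False by (simp add: field_simps)
          then have "ah * v1^2 + bh * v1 * v2 + ch * v2^2 = (1/ah) * (ah * v1 + (bh/2) * v2)^2" for v1 v2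
            using False by (simp add: field_simps power2_eq_square)
          then show ?thesis using that[of ah "bh/2" "1/ah"] False by simp
        next
          case True
          then have b0: "bh = 0" using Adet0 by simp
          then have c0: "ch \<noteq> 0" using nz True by simp
          have "ah * v1^2 + bh * v1 * v2 + ch * v2^2 = (1/ch) * (0 * v1 + ch * v2)^2" for v1 v2
            using True b0 c0 by (simp add: field_simps power2_eq_square)
          then show ?thesis using that[of 0 ch "1/ch"] c0 by simp
        qed
        have qAM: "ah * (m1 * v1 + m2 * v2)^2 + bh * (m1 * v1 + m2 * v2) * (m3 * v1 + m4 * v2) + ch * (m3 * v1 + m4 * v2)^2
            = lam * (ah * v1^2 + bh * v1 * v2 + ch * v2^2)" for v1 v2
        proof -
          have "ah * (m1 * v1 + m2 * v2)^2 + bh * (m1 * v1 + m2 * v2) * (m3 * v1 + m4 * v2) + ch * (m3 * v1 + m4 * v2)^2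
             = cA ah bh ch m1 m2 m3 m4 * v1^2 + cB ah bh ch m1 m2 m3 m4 * v1 * v2 + cC ah bh ch m1 m2 m3 m4 * v2^2"
            unfolding cA_def cB_def cC_def by (simp add: power2_eq_square algebra_simps)
          then show ?thesis unfolding eA eB eC by (simp add: algebra_simps)
        qed
        have qAn: "ah * v1^2 + bh * v1 * v2 + ch * v2^2 = v1^2 + v2^2 - (m1 * v1 + m2 * v2)^2 - (m3 * v1 + m4 * v2)^2" for v1 v2
          unfolding ah_def bh_def ch_def by (simp add: power2_eq_square algebra_simps)
        have sq: "(al1 * (m1 * v1 + m2 * v2) + al2 * (m3 * v1 + m4 * v2))^2 = lam * (al1 * v1 + al2 * v2)^2" for v1 v2
          using qAM[of v1 v2] al(3)[of v1 v2] al(3)[of "m1 * v1 + m2 * v2" "m3 * v1 + m4 * v2"] al(2) by simp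
        define L where "L = al1^2 + al2^2"
        have L: "L \<noteq> 0" using al(1) unfolding L_def by (auto simp: sum_power2_eq_zero_iff)
        define u1 where "u1 = m1 * (-al2) + m2 * al1"
        define u2 where "u2 = m3 * (-al2) + m4 * al1"
        have ua: "al1 * u1 + al2 * u2 = 0"
          using sq[of "-al2" al1] unfolding u1_def u2_def by (simp add: algebra_simps)
        have un: "u1^2 + u2^2 = L"
        proof -
          have "ah * (-al2)^2 + bh * (-al2) * al1 + ch * al1^2 = 0" using al(3)[of "-al2" al1] by (simp add: algebra_simps)
          then show ?thesis using qAn[of "-al2" al1] unfolding u1_def u2_def L_def by (simp add: algebra_simps)
        qed
        define nu where "nu = (u1 * (-al2) + u2 * al1)/L"
        have u1n: "u1 = nu * (-al2)"
        proof -
          have "u1 * L = (u1 * (-al2) + u2 * al1) * (-al2) + (al1 * u1 + al2 * u2) * al1"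
            unfolding L_def by (simp add: power2_eq_square algebra_simps)
          then show ?thesis using ua L unfolding nu_def by (simp add: field_simps)
        qed
        have u2n: "u2 = nu * al1"
        proof -
          have "u2 * L = (u1 * (-al2) + u2 * al1) * al1 + (al1 * u1 + al2 * u2) * al2"
            unfolding L_def by (simp add: power2_eq_square algebra_simps)
          then show ?thesis using ua L unfolding nu_def by (simp add: field_simps)
        qed
        have nu2: "nu^2 = 1"
        proof -
          have "nu^2 * L = L" using un u1n u2n unfolding L_def by (simp add: power2_eq_square algebra_simps)
          then show ?thesis using L by simp
        qed
        define w1 where "w1 = m1 * al1 + m2 * al2"
        define w2 where "w2 = m3 * al1 + m4 * al2"
        have detid: "w1 * u2 - w2 * u1 = dl * L"
          unfolding w1_def w2_def u1_def u2_def dl_def L_def by (simp add: power2_eq_square algebra_simps)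
        have det2: "w1 * u2 - w2 * u1 = nu * (al1 * w1 + al2 * w2)"
          unfolding u1n u2n by (simp add: algebra_simps)
        have aw: "(al1 * w1 + al2 * w2)^2 = lam * L^2"
          using sq[of al1 al2] unfolding w1_def w2_def L_def by (simp add: power2_eq_square)
        have "dl * L = nu * (al1 * w1 + al2 * w2)" using detid det2 by simp
        then have "(dl * L)^2 = (nu * (al1 * w1 + al2 * w2))^2" by simp
        then have "(dl * L)^2 = nu^2 * (al1 * w1 + al2 * w2)^2" by (simp add: power_mult_distrib)
        then have "dl^2 * L^2 = lam * L^2" using nu2 aw by (simp add: power_mult_distrib)
        then have dlam: "dl^2 = lam" using L by simp
        then have "lam * (lam - 1) * (lam + 1) = 0" using d3 by (simp add: power3_eq_cube algebra_simps)
        moreover have "lam \<ge> 0" using dlam by (metis zero_le_power2)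
        ultimately have "lam = 1" using lam0 by auto
        then have dl1: "dl^2 = 1" using dlam by simp
        have "x + y = 2" using fin[OF dl1 Adet0] .
        then have "x = 1 \<and> y = 1 \<and> z = 0" using trace_det_I lag dl1 by simp
        then show False using nz Ah by simp
      qed
    qed
  qed
qed

end



lemma count_le:
  assumes "\<And>xs. distinct xs \<Longrightarrow> set xs \<subseteq> S \<Longrightarrow> length xs \<le> k"
  shows "finite S \<and> card S \<le> k"
proof (cases "finite S")
  case True
  obtain xs where xs: "set xs = S" "distinct xs" using finite_distinct_list[OF True] by blast
  then have "card S = length xs" using distinct_card by fastforce
  then show ?thesis using assms[OF xs(2)] xs(1) True by simp
next
  case False
  obtain F where F: "F \<subseteq> S" "finite F" "card F = Suc k" using infinite_arbitrarily_large[OF False] by blast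
  obtain xs where xs: "set xs = F" "distinct xs" using finite_distinct_list[OF F(2)] by blast
  then have "length xs = Suc k" using distinct_card F(3) by fastforce
  then show ?thesis using assms[OF xs(2)] xs(1) F(1) by simp
qed

lemma five_pts:
  assumes "\<not> (finite S \<and> card S \<le> 4)"
  obtains P1 P2 P3 P4 P5 where "P1 \<in> S" "P2 \<in> S" "P3 \<in> S" "P4 \<in> S" "P5 \<in> S"
    "P1 \<noteq> P2" "P1 \<noteq> P3" "P1 \<noteq> P4" "P1 \<noteq> P5" "P2 \<noteq> P3" "P2 \<noteq> P4" "P2 \<noteq> P5"
    "P3 \<noteq> P4" "P3 \<noteq> P5" "P4 \<noteq> P5"
proof -
  obtain xs where xs: "distinct xs" "set xs \<subseteq> S" "length xs > 4"
    using count_le[of S 4] assms by force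
  have ne0: "xs \<noteq> []" using xs(3) by auto
  have inS: "xs ! n \<in> S" if "n < length xs" for n using xs(2) that nth_mem by blast
  have ne: "xs ! a \<noteq> xs ! b" if "a < length xs" "b < length xs" "a \<noteq> b" for a b
    using xs(1) that nth_eq_iff_index_eq by blast
  show ?thesis
    by (rule that[of "xs!0" "xs!1" "xs!2" "xs!3" "xs!4"]) (use inS[of 0] inS[of 1] inS[of 2] inS[of 3] inS[of 4] ne[of 0 1] ne[of 0 2] ne[of 0 3] ne[of 0 4] ne[of 1 2] ne[of 1 3] ne[of 1 4] ne[of 2 3] ne[of 2 4] ne[of 3 4] xs(3) ne0 in auto)
qed

lemma three_pts:
  assumes "\<not> (finite S \<and> card S \<le> 2)"
  obtains P1 P2 P3 where "P1 \<in> S" "P2 \<in> S" "P3 \<in> S" "P1 \<noteq> P2" "P1 \<noteq> P3" "P2 \<noteq> P3"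
proof -
  obtain xs where xs: "distinct xs" "set xs \<subseteq> S" "length xs > 2"
    using count_le[of S 2] assms by force
  have ne0: "xs \<noteq> []" using xs(3) by auto
  have inS: "xs ! n \<in> S" if "n < length xs" for n using xs(2) that nth_mem by blast
  have ne: "xs ! a \<noteq> xs ! b" if "a < length xs" "b < length xs" "a \<noteq> b" for a b
    using xs(1) that nth_eq_iff_index_eq by blast
  show ?thesis
    by (rule that[of "xs!0" "xs!1" "xs!2"]) (use inS[of 0] inS[of 1] inS[of 2] ne[of 0 1] ne[of 0 2] ne[of 1 2] xs(3) ne0 in auto)
qed

definition sqd :: "pt \<Rightarrow> pt \<Rightarrow> real" where
  "sqd P Q = (fst P - fst Q)^2 + (snd P - snd Q)^2"

lemma dist_sqd: "dist P Q = sqrt (sqd P Q)"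
  unfolding sqd_def by (simp add: dist_prod_def dist_real_def)

lemma rank1_empty:
  fixes P1 P2 P3 Q1 Q2 Q3 v v' :: pt and lam :: real
  assumes E: "sqd v P1 = sqd v' Q1" "sqd v P2 = sqd v' Q2" "sqd v P3 = sqd v' Q3"
    and D: "sqd P1 P2 \<noteq> sqd Q1 Q2" "sqd P1 P3 \<noteq> sqd Q1 Q3" "sqd P2 P3 \<noteq> sqd Q2 Q3"
    and R: "fst P1 - fst P3 = lam * (fst P1 - fst P2)" "snd P1 - snd P3 = lam * (snd P1 - snd P2)"
           "fst Q1 - fst Q3 = lam * (fst Q1 - fst Q2)" "snd Q1 - snd Q3 = lam * (snd Q1 - snd Q2)"
  shows False
proof -
  obtain a1 a2 where P1: "P1 = (a1,a2)" by (cases P1)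
  obtain b1 b2 where P2: "P2 = (b1,b2)" by (cases P2)
  obtain c1 c2 where P3: "P3 = (c1,c2)" by (cases P3)
  obtain d1 d2 where Q1: "Q1 = (d1,d2)" by (cases Q1)
  obtain e1 e2 where Q2: "Q2 = (e1,e2)" by (cases Q2)
  obtain g1 g2 where Q3: "Q3 = (g1,g2)" by (cases Q3)
  obtain x y where v: "v = (x,y)" by (cases v)
  obtain x' y' where v': "v' = (x',y')" by (cases v')
  have c1: "c1 = a1 - lam * (a1 - b1)" and c2: "c2 = a2 - lam * (a2 - b2)"
    and g1: "g1 = d1 - lam * (d1 - e1)" and g2: "g2 = d2 - lam * (d2 - e2)"
    using R unfolding P1 P2 P3 Q1 Q2 Q3 by (simp_all add: algebra_simps)
  have key: "(lam^2 - lam) * (sqd P1 P2 - sqd Q1 Q2) =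
      (sqd v P3 - sqd v' Q3) - lam * (sqd v P2 - sqd v' Q2) - (1 - lam) * (sqd v P1 - sqd v' Q1)"
    unfolding sqd_def P1 P2 P3 Q1 Q2 Q3 v v' fst_conv snd_conv c1 c2 g1 g2
    by (simp add: power2_eq_square algebra_simps)
  then have "(lam^2 - lam) * (sqd P1 P2 - sqd Q1 Q2) = 0" using E by simp
  then have "lam^2 - lam = 0" using D(1) by simp
  then have "lam * (lam - 1) = 0" by (simp add: power2_eq_square algebra_simps)
  then have "lam = 0 \<or> lam = 1" by simp
  then show False
  proof
    assume "lam = 0"
    then have "P3 = P1" "Q3 = Q1" using c1 c2 g1 g2 P1 P3 Q1 Q3 by auto
    then show False using D(2) unfolding sqd_def by simp
  next
    assume "lam = 1"
    then have "P3 = P2" "Q3 = Q2" using c1 c2 g1 g2 P2 P3 Q2 Q3 by auto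
    then show False using D(3) unfolding sqd_def by simp
  qed
qed

context conicC
begin

lemma line_card:
  assumes "(n1, n2) \<noteq> (0,0)"
  shows "finite {v \<in> C. n1 * fst v + n2 * snd v = kk} \<and> card {v \<in> C. n1 * fst v + n2 * snd v = kk} \<le> 2"
proof (rule ccontr)
  assume "\<not> ?thesis"
  then obtain P Q R where PQR: "P \<in> {v \<in> C. n1 * fst v + n2 * snd v = kk}" "Q \<in> {v \<in> C. n1 * fst v + n2 * snd v = kk}"
    "R \<in> {v \<in> C. n1 * fst v + n2 * snd v = kk}" "P \<noteq> Q" "P \<noteq> R" "Q \<noteq> R"
    by (rule three_pts)
  define cr where "cr = (fst Q - fst P) * (snd R - snd P) - (snd Q - snd P) * (fst R - fst P)"
  have e1: "n1 * (fst Q - fst P) + n2 * (snd Q - snd P) = 0" using PQR by (simp add: algebra_simps)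
  have e2: "n1 * (fst R - fst P) + n2 * (snd R - snd P) = 0" using PQR by (simp add: algebra_simps)
  have "n1 * cr = (n1 * (fst Q - fst P) + n2 * (snd Q - snd P)) * (snd R - snd P) - (n1 * (fst R - fst P) + n2 * (snd R - snd P)) * (snd Q - snd P)"
    unfolding cr_def by (simp add: algebra_simps)
  then have 1: "n1 * cr = 0" using e1 e2 by simp
  have "n2 * cr = (n1 * (fst R - fst P) + n2 * (snd R - snd P)) * (fst Q - fst P) - (n1 * (fst Q - fst P) + n2 * (snd Q - snd P)) * (fst R - fst P)"
    unfolding cr_def by (simp add: algebra_simps)
  then have 2: "n2 * cr = 0" using e1 e2 by simp
  have "cr = 0" using 1 2 assms by auto
  then have "col P Q R" unfolding col_def cr_def by simp
  then show False using no_col PQR by blast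
qed

lemma circ_case:
  assumes hc: "\<forall>x y. (x-q1)^2 + (y-q2)^2 - R = kap * eval2 f x y"
    and circ: "\<not> (\<exists>r. is_circle C (q1,q2) r)"
  shows False
proof (cases "kap = 0")
  case True
  have "(q1-q1)^2 + (q2-q2)^2 - R = 0" "(q1+1-q1)^2 + (q2-q2)^2 - R = 0"
    using hc[rule_format, of q1 q2] hc[rule_format, of "q1+1" q2] True by simp_all
  then show False by simp
next
  case False
  have CC: "(x,y) \<in> C \<longleftrightarrow> (x-q1)^2 + (y-q2)^2 = R" for x y
    using memC[of x y] hc False by (metis eq_iff_diff_eq_0 mult_eq_0_iff)
  show False
  proof (cases "R > 0")
    case True
    have "is_circle C (q1,q2) (sqrt R)"
      unfolding is_circle_def
    proof
      show "sqrt R > 0" using True by simp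
      show "C = {p. dist p (q1, q2) = sqrt R}"
      proof (rule set_eqI)
        fix p :: pt
        obtain u v where p: "p = (u,v)" by (cases p)
        have "dist p (q1,q2) = sqrt ((u-q1)^2 + (v-q2)^2)"
          unfolding p by (simp add: dist_Pair_Pair dist_real_def)
        then show "p \<in> C \<longleftrightarrow> p \<in> {p. dist p (q1, q2) = sqrt R}"
          using CC[of u v] True unfolding p by (auto simp: real_sqrt_eq_iff)
      qed
    qed
    then show False using circ by blast
  next
    case False
    have "C \<subseteq> {(q1,q2)}"
    proof
      fix p assume "p \<in> C"
      then obtain u v where p: "p = (u,v)" "(u-q1)^2 + (v-q2)^2 = R" using CC by (cases p) auto
      have "R \<ge> 0" using p(2) by (metis sum_power2_ge_zero)
      then have "R = 0" using False by simp
      then have "u - q1 = 0 \<and> v - q2 = 0" using p(2) by (simp add: sum_power2_eq_zero_iff)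
      then show "p \<in> {(q1,q2)}" using p by simp
    qed
    then show False using infC finite_subset by auto
  qed
qed

end

lemma isq_h:
  "isq (\<lambda>x y. (x-p1)^2 + (y-p2)^2 - (m1 * x + m2 * y + t1 - q1)^2 - (m3 * x + m4 * y + t2 - q2)^2)"
  unfolding isq_def
  by (rule exI[of _ "1 - m1^2 - m3^2"], rule exI[of _ "-2 * (m1 * m2 + m3 * m4)"], rule exI[of _ "1 - m2^2 - m4^2"],
      rule exI[of _ "-2 * p1 - 2 * m1 * (t1-q1) - 2 * m3 * (t2-q2)"], rule exI[of _ "-2 * p2 - 2 * m2 * (t1-q1) - 2 * m4 * (t2-q2)"],
      rule exI[of _ "p1^2 + p2^2 - (t1-q1)^2 - (t2-q2)^2"])
     (simp add: qv_def power2_eq_square algebra_simps)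

lemma isq_circ: "isq (\<lambda>x y. (x-q1)^2 + (y-q2)^2 - R)"
  unfolding isq_def
  by (rule exI[of _ 1], rule exI[of _ 0], rule exI[of _ 1], rule exI[of _ "-2 * q1"], rule exI[of _ "-2 * q2"],
      rule exI[of _ "q1^2 + q2^2 - R"]) (simp add: qv_def power2_eq_square algebra_simps)

lemma isq_comp:
  assumes "isq G"
  shows "isq (\<lambda>x y. G (m1 * x + m2 * y + t1) (m3 * x + m4 * y + t2))"
proof -
  obtain a b c d e g where G: "\<And>x y. G x y = qv a b c d e g x y" using assms unfolding isq_def by blast
  show ?thesis unfolding isq_def G qv_comp by blast
qed



locale cfg = conicC f C for f C +
  fixes P1 P2 P3 Q1 Q2 Q3 :: pt
  assumes DD1: "sqd P1 P2 \<noteq> sqd Q1 Q2" and DD2: "sqd P1 P3 \<noteq> sqd Q1 Q3" and DD3: "sqd P2 P3 \<noteq> sqd Q2 Q3"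
    and cP: "\<not> (\<exists>r. is_circle C P1 r)" and cQ: "\<not> (\<exists>r. is_circle C Q1 r)"
begin

definition XX :: "(real \<times> real \<times> real \<times> real) set" where
  "XX = {(x,y,x',y'). eval2 f x y = 0 \<and> eval2 f x' y' = 0 \<and> sqd (x,y) P1 = sqd (x',y') Q1
          \<and> sqd (x,y) P2 = sqd (x',y') Q2 \<and> sqd (x,y) P3 = sqd (x',y') Q3}"

lemma memXX: "(x,y,x',y') \<in> XX \<longleftrightarrow> eval2 f x y = 0 \<and> eval2 f x' y' = 0 \<and> sqd (x,y) P1 = sqd (x',y') Q1
          \<and> sqd (x,y) P2 = sqd (x',y') Q2 \<and> sqd (x,y) P3 = sqd (x',y') Q3"
  unfolding XX_def by simp

definition "A1 = fst P1 - fst P2"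
definition "A2 = snd P1 - snd P2"
definition "B1 = fst Q1 - fst Q2"
definition "B2 = snd Q1 - snd Q2"
definition "U1 = fst P1 - fst P3"
definition "U2 = snd P1 - snd P3"
definition "W1 = fst Q1 - fst Q3"
definition "W2 = snd Q1 - snd Q3"
definition "K1 = (fst P1)^2 + (snd P1)^2 - (fst P2)^2 - (snd P2)^2 - (fst Q1)^2 - (snd Q1)^2 + (fst Q2)^2 + (snd Q2)^2"
definition "K2 = (fst P1)^2 + (snd P1)^2 - (fst P3)^2 - (snd P3)^2 - (fst Q1)^2 - (snd Q1)^2 + (fst Q3)^2 + (snd Q3)^2"

lemma L1id: "(sqd (x,y) P1 - sqd (x',y') Q1) - (sqd (x,y) P2 - sqd (x',y') Q2)
    = K1 - (2 * (A1 * x + A2 * y) - 2 * (B1 * x' + B2 * y'))"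
  unfolding sqd_def K1_def A1_def A2_def B1_def B2_def by (simp add: power2_eq_square algebra_simps)

lemma L2id: "(sqd (x,y) P1 - sqd (x',y') Q1) - (sqd (x,y) P3 - sqd (x',y') Q3)
    = K2 - (2 * (U1 * x + U2 * y) - 2 * (W1 * x' + W2 * y'))"
  unfolding sqd_def K2_def U1_def U2_def W1_def W2_def by (simp add: power2_eq_square algebra_simps)

lemma LX:
  assumes "(x,y,x',y') \<in> XX"
  shows "2 * (A1 * x + A2 * y) - 2 * (B1 * x' + B2 * y') = K1" "2 * (U1 * x + U2 * y) - 2 * (W1 * x' + W2 * y') = K2"
  using assms L1id[of x y x' y'] L2id[of x y x' y'] unfolding memXX by simp_all

lemma rank1:
  assumes "U1 = lam * A1" "U2 = lam * A2" "W1 = lam * B1" "W2 = lam * B2"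
  shows "XX = {}"
proof (rule ccontr)
  assume "XX \<noteq> {}"
  then obtain x y x' y' where z: "(x,y,x',y') \<in> XX" by auto
  show False
    by (rule rank1_empty[OF _ _ _ DD1 DD2 DD3, where v="(x,y)" and v'="(x',y')" and lam=lam])
       (use z assms in \<open>auto simp: memXX A1_def A2_def B1_def B2_def U1_def U2_def W1_def W2_def algebra_simps\<close>)
qed


lemma sqd_sym: "sqd P Q = sqd Q P" unfolding sqd_def by (simp add: power2_commute)

lemma circ_pt: "\<not> (\<exists>r. is_circle C P r) \<Longrightarrow> \<not> (\<exists>r. is_circle C (fst P, snd P) r)" by simp


lemma case_T:
  assumes dB: "B1 * W2 - B2 * W1 \<noteq> 0"
  shows "finite XX \<and> card XX \<le> 4"
proof -
  define dB where "dB = B1 * W2 - B2 * W1"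
  have dB0: "dB \<noteq> 0" using dB unfolding dB_def .
  define m1 where "m1 = (A1 * W2 - U1 * B2) / dB"
  define m2 where "m2 = (A2 * W2 - U2 * B2) / dB"
  define t1 where "t1 = (-(K1/2) * W2 + (K2/2) * B2) / dB"
  define m3 where "m3 = (B1 * U1 - W1 * A1) / dB"
  define m4 where "m4 = (B1 * U2 - W1 * A2) / dB"
  define t2 where "t2 = (-B1 * (K2/2) + W1 * (K1/2)) / dB"
  have XT: "x' = m1 * x + m2 * y + t1 \<and> y' = m3 * x + m4 * y + t2" if "(x,y,x',y') \<in> XX" for x y x' y'
  proof -
    note L = LX[OF that]
    have "x' * dB = (A1 * x + A2 * y - K1/2) * W2 - B2 * (U1 * x + U2 * y - K2/2)"
    proof -
      have "x' * dB = (B1 * x' + B2 * y') * W2 - B2 * (W1 * x' + W2 * y')" unfolding dB_def by (simp add: algebra_simps)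
      also have "B1 * x' + B2 * y' = A1 * x + A2 * y - K1/2" using L(1) by simp
      also have "W1 * x' + W2 * y' = U1 * x + U2 * y - K2/2" using L(2) by simp
      finally show ?thesis .
    qed
    then have "x' = ((A1 * x + A2 * y - K1/2) * W2 - B2 * (U1 * x + U2 * y - K2/2)) / dB" using dB0 by (simp add: field_simps)
    also have "\<dots> = m1 * x + m2 * y + t1" unfolding m1_def m2_def t1_def using dB0 by (simp add: field_simps)
    finally have 1: "x' = m1 * x + m2 * y + t1" .
    have "y' * dB = B1 * (U1 * x + U2 * y - K2/2) - W1 * (A1 * x + A2 * y - K1/2)"
    proof -
      have "y' * dB = B1 * (W1 * x' + W2 * y') - W1 * (B1 * x' + B2 * y')" unfolding dB_def by (simp add: algebra_simps)
      also have "B1 * x' + B2 * y' = A1 * x + A2 * y - K1/2" using L(1) by simp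
      also have "W1 * x' + W2 * y' = U1 * x + U2 * y - K2/2" using L(2) by simp
      finally show ?thesis .
    qed
    then have "y' = (B1 * (U1 * x + U2 * y - K2/2) - W1 * (A1 * x + A2 * y - K1/2)) / dB" using dB0 by (simp add: field_simps)
    also have "\<dots> = m3 * x + m4 * y + t2" unfolding m3_def m4_def t2_def using dB0 by (simp add: field_simps)
    finally have 2: "y' = m3 * x + m4 * y + t2" .
    show ?thesis using 1 2 by simp
  qed
  have TxE: "m1 * x + m2 * y + t1 = ((A1 * x + A2 * y - K1/2) * W2 - B2 * (U1 * x + U2 * y - K2/2)) / dB" for x y
    unfolding m1_def m2_def t1_def using dB0 by (simp add: field_simps)
  have TyE: "m3 * x + m4 * y + t2 = (B1 * (U1 * x + U2 * y - K2/2) - W1 * (A1 * x + A2 * y - K1/2)) / dB" for x y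
    unfolding m3_def m4_def t2_def using dB0 by (simp add: field_simps)
  have LT: "2 * (A1 * x + A2 * y) - 2 * (B1 * (m1 * x + m2 * y + t1) + B2 * (m3 * x + m4 * y + t2)) = K1" for x y
  proof -
    define r1 where "r1 = A1 * x + A2 * y - K1/2"
    define r2 where "r2 = U1 * x + U2 * y - K2/2"
    have "B1 * (m1 * x + m2 * y + t1) + B2 * (m3 * x + m4 * y + t2) = B1 * ((r1 * W2 - B2 * r2) / dB) + B2 * ((B1 * r2 - W1 * r1) / dB)"
      unfolding TxE TyE r1_def r2_def by simp
    also have "\<dots> = (B1 * (r1 * W2 - B2 * r2) + B2 * (B1 * r2 - W1 * r1)) / dB"
      by (simp add: add_divide_distrib)
    also have "B1 * (r1 * W2 - B2 * r2) + B2 * (B1 * r2 - W1 * r1) = r1 * dB"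
      unfolding dB_def by (simp add: algebra_simps)
    finally have "B1 * (m1 * x + m2 * y + t1) + B2 * (m3 * x + m4 * y + t2) = r1" using dB0 by simp
    then show ?thesis unfolding r1_def by simp
  qed
  define Tx where "Tx = (\<lambda>x y. m1 * x + m2 * y + t1)"
  define Ty where "Ty = (\<lambda>x y. m3 * x + m4 * y + t2)"
  define V where "V = {v. eval2 f (fst v) (snd v) = 0 \<and> eval2 f (Tx (fst v) (snd v)) (Ty (fst v) (snd v)) = 0
                     \<and> sqd v P1 = sqd (Tx (fst v) (snd v), Ty (fst v) (snd v)) Q1}"
  have sub: "XX \<subseteq> (\<lambda>v. (fst v, snd v, Tx (fst v) (snd v), Ty (fst v) (snd v))) ` V"
  proof
    fix z assume z: "z \<in> XX"
    obtain x y x' y' where zz: "z = (x,y,x',y')" by (cases z) auto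
    have X: "(x,y,x',y') \<in> XX" using z zz by simp
    have "x' = Tx x y" "y' = Ty x y" using XT[OF X] unfolding Tx_def Ty_def by auto
    then have "(x,y) \<in> V" using X unfolding V_def memXX by auto
    then show "z \<in> (\<lambda>v. (fst v, snd v, Tx (fst v) (snd v), Ty (fst v) (snd v))) ` V"
      unfolding zz using \<open>x' = Tx x y\<close> \<open>y' = Ty x y\<close> by (auto intro!: image_eqI[of _ _ "(x,y)"])
  qed
  have FV: "finite V \<and> card V \<le> 4"
  proof (rule ccontr)
    assume "\<not> (finite V \<and> card V \<le> 4)"
    then obtain R1 R2 R3 R4 R5 where R: "R1 \<in> V" "R2 \<in> V" "R3 \<in> V" "R4 \<in> V" "R5 \<in> V"
      and d: "R1 \<noteq> R2" "R1 \<noteq> R3" "R1 \<noteq> R4" "R1 \<noteq> R5" "R2 \<noteq> R3" "R2 \<noteq> R4" "R2 \<noteq> R5"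
      "R3 \<noteq> R4" "R3 \<noteq> R5" "R4 \<noteq> R5" by (rule five_pts)
    have inC: "R \<in> C" if "R \<in> V" for R using that memC[of "fst R" "snd R"] unfolding V_def by simp
    have q1: "isq (\<lambda>x y. eval2 f (Tx x y) (Ty x y))" unfolding Tx_def Ty_def by (rule isq_comp[OF isqF])
    obtain lam where lam: "\<forall>x y. eval2 f (Tx x y) (Ty x y) = lam * eval2 f x y"
      using five[OF q1 inC[OF R(1)] inC[OF R(2)] inC[OF R(3)] inC[OF R(4)] inC[OF R(5)] d] R
      unfolding V_def by auto
    define G2 where "G2 = (\<lambda>x y. (x - fst P1)^2 + (y - snd P1)^2 - (m1 * x + m2 * y + t1 - fst Q1)^2 - (m3 * x + m4 * y + t2 - snd Q1)^2)"
    have q2: "isq G2" unfolding G2_def by (rule isq_h)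
    have G2s: "G2 x y = sqd (x,y) P1 - sqd (Tx x y, Ty x y) Q1" for x y
      unfolding G2_def sqd_def Tx_def Ty_def by simp
    obtain c where c: "\<forall>x y. G2 x y = c * eval2 f x y"
      using five[OF q2 inC[OF R(1)] inC[OF R(2)] inC[OF R(3)] inC[OF R(4)] inC[OF R(5)] d] R G2s
      unfolding V_def by auto
    show False
    proof (cases "c = 0")
      case True
      then have G0: "sqd (x,y) P1 = sqd (Tx x y, Ty x y) Q1" for x y using c G2s by simp
      have G0': "sqd (x,y) P2 = sqd (Tx x y, Ty x y) Q2" for x y
        using L1id[of x y "Tx x y" "Ty x y"] LT[of x y] G0[of x y] unfolding Tx_def Ty_def by simp
      have "sqd (Tx (fst P2) (snd P2), Ty (fst P2) (snd P2)) Q2 = 0"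
        using G0'[of "fst P2" "snd P2"] unfolding sqd_def by simp
      then have TP2: "(Tx (fst P2) (snd P2), Ty (fst P2) (snd P2)) = Q2"
        unfolding sqd_def by (auto simp: sum_power2_eq_zero_iff prod_eq_iff)
      have "sqd P2 P1 = sqd Q2 Q1" using G0[of "fst P2" "snd P2"] TP2 by simp
      then show False using DD1 sqd_sym by metis
    next
      case False
      show False
        by (rule deg_case[OF _ False _ circ_pt[OF cP], of m1 m2 t1 "fst Q1" m3 m4 t2 "snd Q1" lam])
           (use c lam in \<open>auto simp: G2_def Tx_def Ty_def\<close>)
    qed
  qed
  have "finite XX" using sub FV finite_subset by blast
  moreover have "card XX \<le> 4"
  proof -
    have "card XX \<le> card ((\<lambda>v. (fst v, snd v, Tx (fst v) (snd v), Ty (fst v) (snd v))) ` V)"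
      using card_mono[OF finite_imageI[OF conjunct1[OF FV]] sub] .
    also have "\<dots> \<le> card V" using card_image_le FV by blast
    finally show ?thesis using FV by linarith
  qed
  ultimately show ?thesis by simp
qed


lemma case_S:
  assumes dB: "B1 * W2 - B2 * W1 = 0"
  shows "finite XX \<and> card XX \<le> 4"
proof (cases "B1 = 0 \<and> B2 = 0 \<and> W1 = 0 \<and> W2 = 0")
  case Bz: True
  define dA where "dA = A1 * U2 - A2 * U1"
  show ?thesis
  proof (cases "dA = 0")
    case False
    define v01 where "v01 = ((K1/2) * U2 - A2 * (K2/2)) / dA"
    define v02 where "v02 = (A1 * (K2/2) - U1 * (K1/2)) / dA"
    have Xv: "x = v01 \<and> y = v02" if "(x,y,x',y') \<in> XX" for x y x' y'
    proof -
      note L = LX[OF that]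
      have e1: "A1 * x + A2 * y = K1/2" using L(1) Bz by simp
      have e2: "U1 * x + U2 * y = K2/2" using L(2) Bz by simp
      have "x * dA = (A1 * x + A2 * y) * U2 - A2 * (U1 * x + U2 * y)" unfolding dA_def by (simp add: algebra_simps)
      then have "x * dA = (K1/2) * U2 - A2 * (K2/2)" using e1 e2 by simp
      then have 1: "x = v01" unfolding v01_def using False by (simp add: field_simps)
      have "y * dA = A1 * (U1 * x + U2 * y) - U1 * (A1 * x + A2 * y)" unfolding dA_def by (simp add: algebra_simps)
      then have "y * dA = A1 * (K2/2) - U1 * (K1/2)" using e1 e2 by simp
      then have 2: "y = v02" unfolding v02_def using False by (simp add: field_simps)
      show ?thesis using 1 2 by simp
    qed
    define V where "V = {v'. eval2 f (fst v') (snd v') = 0 \<and> sqd (v01, v02) P1 = sqd v' Q1}"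
    have sub: "XX \<subseteq> (\<lambda>v'. (v01, v02, fst v', snd v')) ` V"
    proof
      fix z assume z: "z \<in> XX"
      obtain x y x' y' where zz: "z = (x,y,x',y')" by (cases z) auto
      have X: "(x,y,x',y') \<in> XX" using z zz by simp
      have "x = v01" "y = v02" using Xv[OF X] by auto
      then have "(x',y') \<in> V" using X unfolding V_def memXX by auto
      then show "z \<in> (\<lambda>v'. (v01, v02, fst v', snd v')) ` V"
        unfolding zz using \<open>x = v01\<close> \<open>y = v02\<close> by (auto intro!: image_eqI[of _ _ "(x',y')"])
    qed
    have FV: "finite V \<and> card V \<le> 4"
    proof (rule ccontr)
      assume "\<not> (finite V \<and> card V \<le> 4)"
      then obtain R1 R2 R3 R4 R5 where R: "R1 \<in> V" "R2 \<in> V" "R3 \<in> V" "R4 \<in> V" "R5 \<in> V"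
        and d: "R1 \<noteq> R2" "R1 \<noteq> R3" "R1 \<noteq> R4" "R1 \<noteq> R5" "R2 \<noteq> R3" "R2 \<noteq> R4" "R2 \<noteq> R5"
        "R3 \<noteq> R4" "R3 \<noteq> R5" "R4 \<noteq> R5" by (rule five_pts)
      have inC: "R \<in> C" if "R \<in> V" for R using that memC[of "fst R" "snd R"] unfolding V_def by simp
      define G where "G = (\<lambda>x y. (x - fst Q1)^2 + (y - snd Q1)^2 - sqd (v01, v02) P1)"
      have q: "isq G" unfolding G_def by (rule isq_circ)
      have G0: "G (fst R) (snd R) = 0" if "R \<in> V" for R using that unfolding G_def V_def sqd_def by simp
      obtain kap where "\<forall>x y. G x y = kap * eval2 f x y"
        using five[OF q inC[OF R(1)] inC[OF R(2)] inC[OF R(3)] inC[OF R(4)] inC[OF R(5)] d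
          G0[OF R(1)] G0[OF R(2)] G0[OF R(3)] G0[OF R(4)] G0[OF R(5)]] by blast
      then show False using circ_case[OF _ circ_pt[OF cQ]] unfolding G_def by blast
    qed
    have "finite XX" using sub FV finite_subset by blast
    moreover have "card XX \<le> 4"
    proof -
      have "card XX \<le> card ((\<lambda>v'. (v01, v02, fst v', snd v')) ` V)"
        using card_mono[OF finite_imageI[OF conjunct1[OF FV]] sub] .
      also have "\<dots> \<le> card V" using card_image_le FV by blast
      finally show ?thesis using FV by linarith
    qed
    ultimately show ?thesis by simp
  next
    case True
    have "sqd Q1 Q2 = 0" using Bz unfolding sqd_def B1_def B2_def by simp
    then have Anz: "A1^2 + A2^2 \<noteq> 0" using DD1 unfolding sqd_def A1_def A2_def by simp
    define lam where "lam = (if A1 \<noteq> 0 then U1 / A1 else U2 / A2)"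
    have "U1 = lam * A1 \<and> U2 = lam * A2"
    proof (cases "A1 = 0")
      case False
      have "A1 * U2 = A2 * U1" using True unfolding dA_def by simp
      then show ?thesis unfolding lam_def using False by (simp add: field_simps)
    next
      case A10: True
      then have "A2 \<noteq> 0" using Anz by simp
      moreover have "A2 * U1 = 0" using True A10 unfolding dA_def by simp
      ultimately show ?thesis unfolding lam_def using A10 by simp
    qed
    then have "XX = {}" using rank1[of lam] Bz by simp
    then show ?thesis by simp
  qed
next
  case nBz: False
  obtain mu1 mu2 where mu: "(mu1, mu2) \<noteq> (0,0)" "mu1 * B1 + mu2 * W1 = 0" "mu1 * B2 + mu2 * W2 = 0"
  proof (cases "(W1, B1) = (0,0)")
    case False
    show ?thesis by (rule that[of W1 "-B1"]) (use False dB in \<open>auto simp: algebra_simps\<close>)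
  next
    case True
    have nz: "(W2, B2) \<noteq> (0,0)" using nBz True by auto
    show ?thesis by (rule that[of W2 "-B2"]) (use True nz in \<open>auto simp: algebra_simps\<close>)
  qed
  define n1 where "n1 = mu1 * A1 + mu2 * U1"
  define n2 where "n2 = mu1 * A2 + mu2 * U2"
  define kk where "kk = mu1 * K1 + mu2 * K2"
  have Ln: "n1 * x + n2 * y = kk / 2" if "(x,y,x',y') \<in> XX" for x y x' y'
  proof -
    note L = LX[OF that]
    have "2 * (n1 * x + n2 * y) = mu1 * (2 * (A1 * x + A2 * y) - 2 * (B1 * x' + B2 * y')) + mu2 * (2 * (U1 * x + U2 * y) - 2 * (W1 * x' + W2 * y'))
      + 2 * ((mu1 * B1 + mu2 * W1) * x' + (mu1 * B2 + mu2 * W2) * y')"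
      unfolding n1_def n2_def by (simp add: algebra_simps)
    also have "\<dots> = kk" unfolding kk_def L mu(2) mu(3) by simp
    finally show ?thesis by simp
  qed
  show ?thesis
  proof (cases "(n1, n2) = (0,0)")
    case True
    show ?thesis
    proof (cases "mu2 = 0")
      case False
      define lam where "lam = - mu1 / mu2"
      have "U1 = lam * A1" "U2 = lam * A2" "W1 = lam * B1" "W2 = lam * B2"
        using True mu(2,3) False unfolding lam_def n1_def n2_def by (auto simp: field_simps)
      then have "XX = {}" by (rule rank1)
      then show ?thesis by simp
    next
      case m20: True
      then have "mu1 \<noteq> 0" using mu(1) by simp
      then have "A1 = 0" "A2 = 0" "B1 = 0" "B2 = 0" using True mu(2,3) m20 unfolding n1_def n2_def by auto
      then have "sqd P1 P2 = sqd Q1 Q2" unfolding sqd_def A1_def A2_def B1_def B2_def by simp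
      then show ?thesis using DD1 by simp
    qed
  next
    case nn: False
    define V1 where "V1 = {v \<in> C. n1 * fst v + n2 * snd v = kk / 2}"
    have FV1: "finite V1 \<and> card V1 \<le> 2" unfolding V1_def by (rule line_card[OF nn])
    obtain be1 be2 ga where be: "(be1, be2) \<noteq> (0,0)"
      "\<And>x y x' y'. (x,y,x',y') \<in> XX \<Longrightarrow> be1 * x' + be2 * y' = ga x y"
    proof (cases "(B1, B2) = (0,0)")
      case False
      have h: "B1 * x' + B2 * y' = A1 * x + A2 * y - K1/2" if "(x,y,x',y') \<in> XX" for x y x' y'
        using LX(1)[OF that] by (simp add: field_simps)
      show ?thesis
        by (rule that[of B1 B2 "\<lambda>x y. A1 * x + A2 * y - K1/2"]) (use False h in auto)
    next
      case True
      have nz: "(W1, W2) \<noteq> (0,0)" using nBz True by auto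
      have h: "W1 * x' + W2 * y' = U1 * x + U2 * y - K2/2" if "(x,y,x',y') \<in> XX" for x y x' y'
        using LX(2)[OF that] by (simp add: field_simps)
      show ?thesis
        by (rule that[of W1 W2 "\<lambda>x y. U1 * x + U2 * y - K2/2"]) (use h nz in auto)
    qed
    define Wv where "Wv = (\<lambda>v. {v' \<in> C. be1 * fst v' + be2 * snd v' = ga (fst v) (snd v)})"
    have FW: "finite (Wv v) \<and> card (Wv v) \<le> 2" for v unfolding Wv_def by (rule line_card[OF be(1)])
    have sub: "XX \<subseteq> (\<lambda>(v,v'). (fst v, snd v, fst v', snd v')) ` Sigma V1 Wv"
    proof
      fix z assume z: "z \<in> XX"
      obtain x y x' y' where zz: "z = (x,y,x',y')" by (cases z) auto
      have X: "(x,y,x',y') \<in> XX" using z zz by simp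
      have "(x,y) \<in> V1" using X Ln[OF X] memC unfolding V1_def memXX by auto
      moreover have "(x',y') \<in> Wv (x,y)" using X be(2)[OF X] memC unfolding Wv_def memXX by auto
      ultimately have "((x,y),(x',y')) \<in> Sigma V1 Wv" by simp
      then show "z \<in> (\<lambda>(v,v'). (fst v, snd v, fst v', snd v')) ` Sigma V1 Wv"
        unfolding zz by (auto intro!: image_eqI[of _ _ "((x,y),(x',y'))"])
    qed
    have finS: "finite (Sigma V1 Wv)" using FV1 FW by (simp add: finite_SigmaI)
    have "card (Sigma V1 Wv) = (\<Sum>v\<in>V1. card (Wv v))" using FV1 FW by (simp add: card_SigmaI)
    also have "\<dots> \<le> (\<Sum>v\<in>V1. 2)" using FW by (intro sum_mono) auto
    also have "\<dots> = 2 * card V1" by simp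
    also have "\<dots> \<le> 4" using FV1 by simp
    finally have cS: "card (Sigma V1 Wv) \<le> 4" .
    have "finite XX" using sub finS finite_subset by blast
    moreover have "card XX \<le> 4"
    proof -
      have "card XX \<le> card ((\<lambda>(v,v'). (fst v, snd v, fst v', snd v')) ` Sigma V1 Wv)"
        using card_mono[OF finite_imageI[OF finS] sub] .
      also have "\<dots> \<le> card (Sigma V1 Wv)" using card_image_le finS by blast
      finally show ?thesis using cS by linarith
    qed
    ultimately show ?thesis by simp
  qed
qed

lemma main_XX: "finite XX \<and> card XX \<le> 4"
  using case_T case_S by blast

end



theorem lemma4p3:
  fixes d m n :: nat and f1 f2 :: "real poly poly" and C1 C2 :: "pt set"
    and p q :: "nat \<Rightarrow> pt" and i j k l u w :: nat
  assumes "d \<ge> 1"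
    and "irreducible_curve C1" and "irreducible_curve C2"
    and "curve_degree C1 \<le> d" and "curve_degree C2 \<le> d"
    and "f1 \<noteq> 0" "zset f1 = C1" "tdeg f1 = curve_degree C1"
    and "f2 \<noteq> 0" "zset f2 = C2" "tdeg f2 = curve_degree C2"
    and "inj_on p {1..m}" "p ` {1..m} \<subseteq> C1"
    and "inj_on q {1..n}" "q ` {1..n} \<subseteq> C2"
    and "\<not> vertical_line C1" "\<not> vertical_line C2"
    and "p ` {1..m} \<inter> q ` {1..n} = {}"
    and "circle_cond C1 (q ` {1..n})" "circle_cond C2 (p ` {1..m})"
    and "line_cond C1 (q ` {1..n})" "line_cond C2 (p ` {1..m})"
    and "i \<in> {1..m}" "j \<in> {1..m}" "k \<in> {1..m}" "l \<in> {1..m}" "u \<in> {1..m}" "w \<in> {1..m}"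
    and "dist (p i) (p k) \<noteq> dist (p j) (p l)"
    and "dist (p i) (p u) \<noteq> dist (p j) (p w)"
    and "dist (p k) (p u) \<noteq> dist (p l) (p w)"
    and "is_conic C2"
  shows "finite (Cset f2 p i j \<inter> Cset f2 p k l \<inter> Cset f2 p u w) \<and>
         card (Cset f2 p i j \<inter> Cset f2 p k l \<inter> Cset f2 p u w) \<le> 4"
proof -
  have cc: "conicC f2 C2" by unfold_locales (use assms(9,10,11,32) in auto)
  have circ: "\<not> (\<exists>r. is_circle C2 (p s) r)" if "s \<in> {1..m}" for s
    using assms(20) that unfolding circle_cond_def by blast
  have sq: "sqd P Q \<noteq> sqd P' Q'" if "dist P Q \<noteq> dist P' Q'" for P Q P' Q'
    using that dist_sqd by metis
  interpret cf: cfg f2 C2 "p i" "p k" "p u" "p j" "p l" "p w"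
    by (rule cfg.intro[OF cc], unfold_locales)
       (use sq[OF assms(29)] sq[OF assms(30)] sq[OF assms(31)] circ[OF assms(23)] circ[OF assms(24)] in auto)
  have "Cset f2 p i j \<inter> Cset f2 p k l \<inter> Cset f2 p u w = cf.XX"
    unfolding Cset_def cf.XX_def sqd_def by auto
  then show ?thesis using cf.main_XX by simp
qed


end
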